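(* Let $A_0B_0C_0$ be a triangle, $P$ a fixed point, and $\{A_kB_kC_k\}_{k\ge 0}$ a chain of Miquel triangles with Miquel point $P$, all nondegenerate and with $P$ on none of their side lines. Then: (a) If $P$ is the first Brocard point of $A_0B_0C_0$, then $P$ is the first Brocard point of every $A_kB_kC_k$ and $A_0B_0C_0\sim A_kB_kC_k$ for all $k\ge 1$. (b) If $P$ is the second Brocard point of $A_0B_0C_0$, then $P$ is the second Brocard point of every $A_kB_kC_k$ and $A_0B_0C_0\sim A_kB_kC_k$ for all $k\ge 1$. (c) If $P$ is the circumcenter of $A_0B_0C_0$ or one of the points $S_{A_0},S_{B_0},S_{C_0}$, then $A_0B_0C_0\sim A_kB_kC_k$ for every $k\equiv 0\pmod 3$ and every $k\equiv 1\pmod 3$. (d) If $P$ is the orthocenter of $A_0B_0C_0$ or one of the points $M_{A_0},M_{B_0},M_{C_0}$, then $A_0B_0C_0\sim A_kB_kC_k$ for every $k\equiv 2\pmod 3$ and every $k\equiv 0\pmod 3$.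
   Context: Miquel triangle: given a triangle $ABC$ and a point $P$ not on the lines $BC,CA,AB$, a triangle $XYZ$ with $X$ on line $BC$, $Y$ on line $CA$, $Z$ on line $AB$ is a Miquel triangle of $P$ relative to $ABC$ if $P$ lies on the circles through $A,Y,Z$, through $B,Z,X$, and through $C,X,Y$. Chain: for each $k\ge 0$, $A_{k+1}\in$ line $B_kC_k$, $B_{k+1}\in$ line $C_kA_k$, $C_{k+1}\in$ line $A_kB_k$, and $A_{k+1}B_{k+1}C_{k+1}$ is a Miquel triangle of $P$ relative to $A_kB_kC_k$. "$\sim$" means similarity of triangles (as unlabeled triangles). First Brocard point of $ABC$: point $P$ with $\angle BAP=\angle CBP=\angle ACP$; second: $\angle PAC=\angle PBA=\angle PCB$. With $O$ the circumcenter of $ABC$: $S_A$ is the point where the ray from $A$ along the symmedian from $A$ (reflection of the median in the angle bisector) meets the arc $BC$ of the circle through $B,C,O$ containing $O$; $S_B,S_C$ analogously. $M_A$ (for $\angle A\ne 90^\circ$, $E$ the midpoint of $BC$): if $\angle A<90^\circ$, with $F$ the second intersection of line $AE$ with the circumcircle of $ABC$, $M_A$ is the point on segment $AE$ with $EM_A=EF$; if $\angle A>90^\circ$, with $F$ such that $ABFC$ is a parallelogram, $M_A$ is the second intersection of line $AE$ with the circumcircle of $FBC$; $M_B,M_C$ analogously. *)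

theory Defs
  imports "HOL-Analysis.Analysis"
begin

text \<open>Points of the Euclidean plane are modelled as complex numbers.\<close>

definition vangle :: "complex \<Rightarrow> complex \<Rightarrow> real" where
  "vangle u v = arccos (inner u v / (norm u * norm v))"

text \<open>ang X V Y is the (unoriented, in [0,pi]) angle XVY at vertex V.\<close>
definition ang :: "complex \<Rightarrow> complex \<Rightarrow> complex \<Rightarrow> real" where
  "ang X V Y = vangle (X - V) (Y - V)"

definition nondeg_triangle :: "complex \<Rightarrow> complex \<Rightarrow> complex \<Rightarrow> bool" where
  "nondeg_triangle A B C \<longleftrightarrow> \<not> collinear {A, B, C}"

definition on_line :: "complex \<Rightarrow> complex \<Rightarrow> complex \<Rightarrow> bool" where
  "on_line X U V \<longleftrightarrow> collinear {U, V, X}"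

definition on_circle3 :: "complex \<Rightarrow> complex \<Rightarrow> complex \<Rightarrow> complex \<Rightarrow> bool" where
  "on_circle3 P U V W \<longleftrightarrow> \<not> collinear {U, V, W} \<and>
     (\<exists>c. dist c U = dist c V \<and> dist c U = dist c W \<and> dist c U = dist c P)"

definition miquel_triangle ::
  "complex \<Rightarrow> complex \<Rightarrow> complex \<Rightarrow> complex \<Rightarrow> complex \<Rightarrow> complex \<Rightarrow> complex \<Rightarrow> bool" where
  "miquel_triangle P A B C X Y Z \<longleftrightarrow>
     on_line X B C \<and> on_line Y C A \<and> on_line Z A B \<and>
     on_circle3 P A Y Z \<and> on_circle3 P B Z X \<and> on_circle3 P C X Y"

text \<open>Labelled similarity (SSS, mirror images allowed), and similarity of
  unlabelled triangles (some relabelling of the vertices).\<close>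
definition sim_labelled ::
  "complex \<Rightarrow> complex \<Rightarrow> complex \<Rightarrow> complex \<Rightarrow> complex \<Rightarrow> complex \<Rightarrow> bool" where
  "sim_labelled A B C A' B' C' \<longleftrightarrow>
     (\<exists>k>0. dist A' B' = k * dist A B \<and> dist B' C' = k * dist B C \<and> dist C' A' = k * dist C A)"

definition tri_sim ::
  "complex \<Rightarrow> complex \<Rightarrow> complex \<Rightarrow> complex \<Rightarrow> complex \<Rightarrow> complex \<Rightarrow> bool" where
  "tri_sim A B C A' B' C' \<longleftrightarrow>
     sim_labelled A B C A' B' C' \<or> sim_labelled A B C A' C' B' \<or>
     sim_labelled A B C B' A' C' \<or> sim_labelled A B C B' C' A' \<or>
     sim_labelled A B C C' A' B' \<or> sim_labelled A B C C' B' A'"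

definition first_brocard :: "complex \<Rightarrow> complex \<Rightarrow> complex \<Rightarrow> complex \<Rightarrow> bool" where
  "first_brocard P A B C \<longleftrightarrow> P \<in> interior (convex hull {A, B, C}) \<and>
     ang B A P = ang C B P \<and> ang C B P = ang A C P"

definition second_brocard :: "complex \<Rightarrow> complex \<Rightarrow> complex \<Rightarrow> complex \<Rightarrow> bool" where
  "second_brocard P A B C \<longleftrightarrow> P \<in> interior (convex hull {A, B, C}) \<and>
     ang P A C = ang P B A \<and> ang P B A = ang P C B"

definition is_circumcenter :: "complex \<Rightarrow> complex \<Rightarrow> complex \<Rightarrow> complex \<Rightarrow> bool" where
  "is_circumcenter Oc A B C \<longleftrightarrow> dist Oc A = dist Oc B \<and> dist Oc B = dist Oc C"

definition is_orthocenter :: "complex \<Rightarrow> complex \<Rightarrow> complex \<Rightarrow> complex \<Rightarrow> bool" where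
  "is_orthocenter H A B C \<longleftrightarrow> inner (H - A) (B - C) = 0 \<and> inner (H - B) (C - A) = 0"

definition reflect_dir :: "complex \<Rightarrow> complex \<Rightarrow> complex" where
  "reflect_dir w x = (2 * inner x w / inner w w) *\<^sub>R w - x"

text \<open>Direction of the symmedian from A: the median direction reflected in the
  internal angle bisector at A.\<close>
definition symmedian_dir :: "complex \<Rightarrow> complex \<Rightarrow> complex \<Rightarrow> complex" where
  "symmedian_dir A B C =
     reflect_dir ((B - A) /\<^sub>R norm (B - A) + (C - A) /\<^sub>R norm (C - A)) ((B + C) / 2 - A)"

definition orient :: "complex \<Rightarrow> complex \<Rightarrow> complex \<Rightarrow> real" where
  "orient U V X = Im (cnj (V - U) * (X - U))"

text \<open>S is the point S_A of triangle ABC.  The arc BC containing Oc consists of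
  B, C and the points of the circle strictly on the same side of line BC as Oc.\<close>
definition is_S_point :: "complex \<Rightarrow> complex \<Rightarrow> complex \<Rightarrow> complex \<Rightarrow> bool" where
  "is_S_point S A B C \<longleftrightarrow>
     (\<exists>Oc. is_circumcenter Oc A B C \<and> \<not> collinear {B, C, Oc} \<and>
        (\<exists>t>0. S = A + t *\<^sub>R symmedian_dir A B C) \<and>
        on_circle3 S B C Oc \<and>
        (S = B \<or> S = C \<or> orient B C S * orient B C Oc > 0))"

text \<open>Second intersection (with multiplicity) of the line through Q with direction
  D and the circle with centre c passing through Q.\<close>
definition second_inter :: "complex \<Rightarrow> complex \<Rightarrow> complex \<Rightarrow> complex" where
  "second_inter Q D c = Q - (2 * inner (Q - c) D / inner D D) *\<^sub>R D"

definition is_M_point :: "complex \<Rightarrow> complex \<Rightarrow> complex \<Rightarrow> complex \<Rightarrow> bool" where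
  "is_M_point M A B C \<longleftrightarrow>
     (let E = (B + C) / 2 in
       (ang B A C < pi / 2 \<and>
          (\<exists>Oc F. is_circumcenter Oc A B C \<and> F = second_inter A (E - A) Oc \<and>
                 M \<in> closed_segment A E \<and> dist E M = dist E F))
     \<or> (ang B A C > pi / 2 \<and>
          (\<exists>F Oc'. F = B + C - A \<and> is_circumcenter Oc' F B C \<and>
                  M = second_inter F (E - F) Oc')))"

end

theory Submission
  imports Defs
begin


definition cr :: "complex \<Rightarrow> complex \<Rightarrow> real" where "cr u v = Im (cnj u * v)"

lemma col_iff: "collinear {x, y, z::complex} \<longleftrightarrow> cr (y - x) (z - x) = 0"
proof (cases "y = x")
  case True then show ?thesis by (simp add: cr_def collinear_2)
next
  case False
  have "collinear {x, y, z} \<longleftrightarrow> collinear {0, y - x, z - x}"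
  proof -
    have "collinear {x, y, z} = collinear {y, x, z}" by (simp add: insert_commute)
    also have "\<dots> = collinear {0, y - x, z - x}" by (rule collinear_3) simp
    finally show ?thesis .
  qed
  also have "\<dots> \<longleftrightarrow> (z - x) / (y - x) \<in> \<real>" by (rule collinear_iff_Reals)
  also have "\<dots> \<longleftrightarrow> Im ((z - x) / (y - x)) = 0" by (simp add: complex_is_Real_iff)
  also have "\<dots> \<longleftrightarrow> cr (y - x) (z - x) = 0"
    using False by (simp add: cr_def Im_divide field_simps) (auto simp: algebra_simps complex_eq_iff)
  finally show ?thesis .
qed

lemma circ_core:
  fixes d g b x :: complex and s t :: real
  assumes "b = d * (1 + \<i> * s)" "x = d * (1 + \<i> * t)" "s \<noteq> t"
    and "2 * Re (cnj g * b) = (cmod b)^2" "2 * Re (cnj g * x) = (cmod x)^2"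
  shows "2 * Im (cnj g * b) = - t * (cmod b)^2"
proof -
  obtain d1 d2 where d: "d = Complex d1 d2" by (metis complex.exhaust)
  obtain g1 g2 where g: "g = Complex g1 g2" by (metis complex.exhaust)
  have e1: "2 * (g1 * (d1 - d2 * s) + g2 * (d2 + d1 * s)) = (d1 - d2 * s)^2 + (d2 + d1 * s)^2"
    using assms(4) unfolding assms(1) d g by (simp add: cmod_power2 algebra_simps)
  have e2: "2 * (g1 * (d1 - d2 * t) + g2 * (d2 + d1 * t)) = (d1 - d2 * t)^2 + (d2 + d1 * t)^2"
    using assms(5) unfolding assms(2) d g by (simp add: cmod_power2 algebra_simps)
  have "(s - t) * (2 * (g1 * (d2 + d1 * s) - g2 * (d1 - d2 * s)) + t * ((d1 - d2 * s)^2 + (d2 + d1 * s)^2)) = 0"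
    using e1 e2 by algebra
  then have "2 * (g1 * (d2 + d1 * s) - g2 * (d1 - d2 * s)) + t * ((d1 - d2 * s)^2 + (d2 + d1 * s)^2) = 0"
    using assms(3) by simp
  then show ?thesis unfolding assms(1) d g by (simp add: cmod_power2 algebra_simps)
qed

definition pd :: "complex \<Rightarrow> complex \<Rightarrow> complex" where
  "pd u v = (u * cnj v - v * cnj u) / (2 * (cnj v - cnj u))"

lemma pd_alt: "pd b c = - \<i> * of_real (cr b c) / cnj (c - b)"
proof -
  have h: "b * cnj c - c * cnj b = - 2 * \<i> * of_real (cr b c)"
    by (simp add: cr_def complex_eq_iff algebra_simps)
  show ?thesis
    unfolding pd_def h by (cases "b = c") (simp_all add: field_simps)
qed

lemma pd_nz: "b \<noteq> c \<Longrightarrow> cr b c \<noteq> 0 \<Longrightarrow> pd b c \<noteq> 0"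
  by (simp add: pd_alt)

lemma div_pd: "b \<noteq> c \<Longrightarrow> cr b c \<noteq> 0 \<Longrightarrow> x / pd b c = \<i> * x * cnj (c - b) / of_real (cr b c)"
  by (simp add: pd_alt field_simps)

lemma cr_props: "cr u v = - cr v u" "cr (u - w) v = cr u v - cr w v" "cr u (v - w) = cr u v - cr u w"
  "cr u u = 0" "cr (u + w) v = cr u v + cr w v" "cr u (v + w) = cr u v + cr u w"
  by (simp_all add: cr_def algebra_simps)

lemma re_div_pd: "b \<noteq> c \<Longrightarrow> cr b c \<noteq> 0 \<Longrightarrow> Re (x / pd b c) = cr x (c - b) / cr b c"
proof -
  assume a: "b \<noteq> c" "cr b c \<noteq> 0"
  have "x / pd b c = \<i> * x * cnj (c - b) / of_real (cr b c)" using a by (rule div_pd)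
  also have "Re \<dots> = Re (\<i> * x * cnj (c - b)) / cr b c" by (simp add: Re_divide_of_real)
  also have "Re (\<i> * x * cnj (c - b)) = cr x (c - b)" by (simp add: cr_def algebra_simps)
  finally show ?thesis .
qed

lemma on_line_re:
  assumes "b \<noteq> c" "cr b c \<noteq> 0" "cr (c - b) (x - b) = 0"
  shows "x = pd b c * (1 + \<i> * of_real (Im (x / pd b c)))"
proof -
  have "cr x (c - b) = cr b c"
    using assms(3) by (simp add: cr_def algebra_simps)
  then have "Re (x / pd b c) = 1" using assms by (simp add: re_div_pd)
  then have "x / pd b c = 1 + \<i> * of_real (Im (x / pd b c))"
    by (simp add: complex_eq_iff)
  moreover have "pd b c \<noteq> 0" using assms pd_nz by auto
  ultimately show ?thesis by (simp add: field_simps)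
qed

lemma circ_dist:
  assumes "cmod (g - b) = cmod g"
  shows "2 * Re (cnj g * b) = (cmod b)^2"
proof -
  have "(cmod (g - b))^2 = (cmod g)^2" using assms by simp
  then have "Re (g - b)^2 + Im (g - b)^2 = Re g ^2 + Im g^2" by (simp only: cmod_power2)
  moreover have "(cmod b)^2 = Re b^2 + Im b^2" by (simp only: cmod_power2)
  ultimately show ?thesis by (simp add: algebra_simps power2_eq_square)
qed


lemma on_line_cr: "on_line X U V \<longleftrightarrow> cr (V - U) (X - U) = 0"
  unfolding on_line_def by (rule col_iff)

lemma nondeg_cr: "nondeg_triangle A B C \<longleftrightarrow> cr (B - A) (C - A) \<noteq> 0"
  unfolding nondeg_triangle_def by (simp add: col_iff)

lemma off_cr: "\<not> on_line P B C \<longleftrightarrow> cr (B - P) (C - P) \<noteq> 0"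
  unfolding on_line_cr by (simp add: cr_def algebra_simps)

lemma circle_step:
  fixes b c x d g :: complex
  assumes bc: "b \<noteq> c" "cr b c \<noteq> 0" and xl: "cr (c - b) (x - b) = 0" and ul: "cr (c - b) (u - b) = 0"
    and ux: "u \<noteq> x"
    and gu: "cmod (g - u) = cmod g" and gx: "cmod (g - x) = cmod g"
  shows "2 * Im (cnj g * u) = - Im (x / pd b c) * (cmod u)^2"
proof -
  have u: "u = pd b c * (1 + \<i> * of_real (Im (u / pd b c)))" using on_line_re[OF bc ul] .
  have x: "x = pd b c * (1 + \<i> * of_real (Im (x / pd b c)))" using on_line_re[OF bc xl] .
  have ne: "Im (u / pd b c) \<noteq> Im (x / pd b c)" using u x ux by metis
  show ?thesis
    by (rule circ_core[OF u x ne circ_dist[OF gu] circ_dist[OF gx]])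
qed

lemma dist_rel: "dist c0 Q = dist c0 P \<Longrightarrow> cmod ((c0 - P) - (Q - P)) = cmod (c0 - P)"
  by (simp add: dist_norm)

lemma miquel_spiral:
  assumes nd: "nondeg_triangle A B C"
    and off: "\<not> on_line P B C" "\<not> on_line P C A" "\<not> on_line P A B"
    and mq: "miquel_triangle P A B C X Y Z"
  shows "\<exists>\<mu>. \<mu> \<noteq> 0 \<and> X - P = \<mu> * pd (B - P) (C - P) \<and> Y - P = \<mu> * pd (C - P) (A - P)
            \<and> Z - P = \<mu> * pd (A - P) (B - P)"
proof -
  define a b c x y z where "a = A - P" and "b = B - P" and "c = C - P" and "x = X - P" and "y = Y - P" and "z = Z - P"
  have cab: "cr a b \<noteq> 0" "cr b c \<noteq> 0" "cr c a \<noteq> 0"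
    using off unfolding off_cr a_def b_def c_def by auto
  have dis: "a \<noteq> b" "b \<noteq> c" "c \<noteq> a" using cab by (auto simp: cr_def)
  have nz: "b \<noteq> 0" "c \<noteq> 0" using cab by (auto simp: cr_def)
  have lx: "cr (c - b) (x - b) = 0" and ly: "cr (a - c) (y - c) = 0" and lz: "cr (b - a) (z - a) = 0"
    using mq unfolding miquel_triangle_def on_line_cr a_def b_def c_def x_def y_def z_def by auto
  have triv: "cr (c - b) (b - b) = 0" "cr (c - b) (c - b) = 0" "cr (a - c) (c - c) = 0" "cr (b - a) (b - a) = 0"
    by (simp_all add: cr_def algebra_simps)
  obtain g1 where g1: "dist g1 B = dist g1 Z" "dist g1 B = dist g1 X" "dist g1 B = dist g1 P"
    and nc1: "\<not> collinear {B, Z, X}"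
    using mq unfolding miquel_triangle_def on_circle3_def by auto
  obtain g2 where g2: "dist g2 C = dist g2 X" "dist g2 C = dist g2 Y" "dist g2 C = dist g2 P"
    and nc2: "\<not> collinear {C, X, Y}"
    using mq unfolding miquel_triangle_def on_circle3_def by auto
  have BX: "b \<noteq> x" "b \<noteq> z" using nc1 unfolding b_def x_def z_def by (auto simp: insert_commute)
  have CX: "c \<noteq> x" "c \<noteq> y" using nc2 unfolding c_def x_def y_def by (auto simp: insert_commute)
  define G1 where "G1 = g1 - P"
  define G2 where "G2 = g2 - P"
  have G1: "cmod (G1 - b) = cmod G1" "cmod (G1 - x) = cmod G1" "cmod (G1 - z) = cmod G1"
    using g1 unfolding G1_def b_def x_def z_def by (auto simp: dist_norm)
  have G2: "cmod (G2 - c) = cmod G2" "cmod (G2 - x) = cmod G2" "cmod (G2 - y) = cmod G2"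
    using g2 unfolding G2_def c_def x_def y_def by (auto simp: dist_norm)
  have e1: "2 * Im (cnj G1 * b) = - Im (x / pd b c) * (cmod b)^2"
    by (rule circle_step[OF dis(2) cab(2) lx triv(1) BX(1) G1(1) G1(2)])
  have e2: "2 * Im (cnj G1 * b) = - Im (z / pd a b) * (cmod b)^2"
    by (rule circle_step[OF dis(1) cab(1) lz triv(4) BX(2) G1(1) G1(3)])
  have e3: "2 * Im (cnj G2 * c) = - Im (x / pd b c) * (cmod c)^2"
    by (rule circle_step[OF dis(2) cab(2) lx triv(2) CX(1) G2(1) G2(2)])
  have e4: "2 * Im (cnj G2 * c) = - Im (y / pd c a) * (cmod c)^2"
    by (rule circle_step[OF dis(3) cab(3) ly triv(3) CX(2) G2(1) G2(3)])
  have tz: "Im (z / pd a b) = Im (x / pd b c)" using e1 e2 nz by simp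
  have ty: "Im (y / pd c a) = Im (x / pd b c)" using e3 e4 nz by simp
  define \<mu> where "\<mu> = 1 + \<i> * of_real (Im (x / pd b c))"
  have "\<mu> \<noteq> 0" unfolding \<mu>_def by (simp add: complex_eq_iff)
  moreover have "x = \<mu> * pd b c" using on_line_re[OF dis(2) cab(2) lx] unfolding \<mu>_def by (simp add: mult.commute)
  moreover have "y = \<mu> * pd c a" using on_line_re[OF dis(3) cab(3) ly] unfolding \<mu>_def ty by (simp add: mult.commute)
  moreover have "z = \<mu> * pd a b" using on_line_re[OF dis(1) cab(1) lz] unfolding \<mu>_def tz by (simp add: mult.commute)
  ultimately show ?thesis unfolding a_def b_def c_def x_def y_def z_def by blast
qed


lemma inner_cnj: "inner x y = Re (y * cnj x)"
  by (simp add: inner_complex_def algebra_simps)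

lemma vangle_q: "vangle u v = arccos (Re (v * cnj u) / cmod (v * cnj u))"
  by (simp add: vangle_def inner_cnj norm_mult mult.commute)

lemma arccos_div_eq:
  assumes "arccos (Re z1 / cmod z1) = arccos (Re z2 / cmod z2)"
  shows "Re z1 / cmod z1 = Re z2 / cmod z2"
proof -
  have b: "\<bar>Re z / cmod z\<bar> \<le> 1" for z
  proof (cases "z = 0")
    case False
    then have "cmod z > 0" by simp
    then show ?thesis using abs_Re_le_cmod[of z] by (simp add: abs_div divide_le_eq_1)
  qed simp
  show ?thesis using assms arccos_eq_iff b by blast
qed

lemma dir_eq:
  assumes z1: "z1 \<noteq> 0" and z2: "z2 \<noteq> 0" and re: "Re z1 / cmod z1 = Re z2 / cmod z2"
    and im: "Im z1 * Im z2 > 0"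
  shows "cnj z1 / z1 = cnj z2 / z2"
proof -
  define x where "x = Re z1 / cmod z1"
  define y1 where "y1 = Im z1 / cmod z1"
  define y2 where "y2 = Im z2 / cmod z2"
  have n1: "cmod z1 > 0" and n2: "cmod z2 > 0" using z1 z2 by auto
  have s1: "x^2 + y1^2 = 1" unfolding x_def y1_def using n1
    by (simp add: power_divide cmod_power2[symmetric] field_simps) (simp add: cmod_power2)
  have s2: "x^2 + y2^2 = 1" unfolding re x_def y2_def using n2
    by (simp add: power_divide field_simps) (simp add: cmod_power2)
  have "y1 * y2 > 0" unfolding y1_def y2_def using im n1 n2 by (simp add: field_simps)
  moreover have "y1^2 = y2^2" using s1 s2 by simp
  ultimately have yy: "y1 = y2"
  proof -
    assume p: "y1 * y2 > 0" and q: "y1^2 = y2^2"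
    have "(y1 - y2) * (y1 + y2) = 0" using q by (simp add: algebra_simps power2_eq_square)
    moreover have "y1 + y2 \<noteq> 0"
    proof
      assume "y1 + y2 = 0"
      then have "y1 * y2 = - (y1 * y1)" by (simp add: eq_neg_iff_add_eq_0[symmetric])
      then show False using p by (smt (verit) zero_le_square)
    qed
    ultimately show ?thesis by simp
  qed
  have e1: "z1 = of_real (cmod z1) * Complex x y1" using n1 unfolding x_def y1_def
    by (simp add: complex_eq_iff)
  have e2: "z2 = of_real (cmod z2) * Complex x y1" using n2 unfolding x_def re yy y2_def
    by (simp add: complex_eq_iff)
  have "cnj z1 / z1 = cnj (Complex x y1) / Complex x y1"
    by (subst (1 2) e1) (use n1 in \<open>simp add: field_simps\<close>)
  also have "\<dots> = cnj z2 / z2"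
    by (subst (1 2) e2) (use n2 in \<open>simp add: field_simps\<close>)
  finally show ?thesis .
qed

lemma pd_over:
  assumes "u \<noteq> 0" "u \<noteq> v"
  shows "pd u v = (1 - cnj (u * cnj (v - u)) / (u * cnj (v - u))) / 2 * u"
proof -
  define q where "q = u * cnj (v - u)"
  have q0: "q \<noteq> 0" using assms unfolding q_def by simp
  have "cr u v = - Im q" unfolding q_def cr_def by (simp add: algebra_simps)
  then have "pd u v = \<i> * of_real (Im q) / cnj (v - u)" by (simp add: pd_alt)
  also have "\<dots> = \<i> * of_real (Im q) / q * u" unfolding q_def using assms by (simp add: field_simps)
  also have "\<i> * of_real (Im q) = (q - cnj q) / 2" by (simp add: complex_eq_iff)
  finally show ?thesis using q0 unfolding q_def[symmetric] by (simp add: field_simps)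
qed

lemma pd_sym: "pd u v = pd v u"
proof -
  have "cr v u = - cr u v" "cnj (u - v) = - cnj (v - u)" by (simp_all add: cr_def algebra_simps)
  then show ?thesis by (simp add: pd_alt) (metis minus_diff_eq divide_minus_right)
qed

lemma hull_signs:
  assumes "P \<in> convex hull {A, B, C}"
    and "cr (A - P) (B - P) \<noteq> 0" "cr (B - P) (C - P) \<noteq> 0" "cr (C - P) (A - P) \<noteq> 0"
  shows "cr (A - P) (B - P) * cr (B - P) (C - P) > 0 \<and> cr (B - P) (C - P) * cr (C - P) (A - P) > 0"
proof -
  obtain u v w where uvw: "0 \<le> u" "0 \<le> v" "0 \<le> w" "u + v + w = 1"
    and P: "P = u *\<^sub>R A + v *\<^sub>R B + w *\<^sub>R C"
    using assms(1) unfolding convex_hull_3 by auto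
  define a b c where "a = A - P" and "b = B - P" and "c = C - P"
  have P': "P = of_real u * A + of_real v * B + of_real w * C" using P by (simp add: scaleR_conv_of_real)
  have s1: "of_real u + of_real v + of_real w = (1::complex)" using uvw(4)
    by (metis of_real_1 of_real_add)
  have z: "of_real u * a + of_real v * b + of_real w * c = 0"
    unfolding a_def b_def c_def using P' s1 by algebra
  define X Y Z where "X = cr a b" and "Y = cr b c" and "Z = cr c a"
  have nz: "X \<noteq> 0" "Y \<noteq> 0" "Z \<noteq> 0" using assms unfolding X_def Y_def Z_def a_def b_def c_def by auto
  have r1: "v * X = w * Z"
  proof -
    have "cr a (of_real u * a + of_real v * b + of_real w * c) = 0" using z by (simp add: cr_def)
    then show ?thesis unfolding X_def Z_def by (simp add: cr_def algebra_simps)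
  qed
  have r2: "w * Y = u * X"
  proof -
    have "cr b (of_real u * a + of_real v * b + of_real w * c) = 0" using z by (simp add: cr_def)
    then show ?thesis unfolding X_def Y_def by (simp add: cr_def algebra_simps)
  qed
  have r3: "u * Z = v * Y"
  proof -
    have "cr c (of_real u * a + of_real v * b + of_real w * c) = 0" using z by (simp add: cr_def)
    then show ?thesis unfolding Y_def Z_def by (simp add: cr_def algebra_simps)
  qed
  have pos: "u > 0 \<and> v > 0 \<and> w > 0"
  proof (rule ccontr)
    assume "\<not> ?thesis"
    then have "u = 0 \<or> v = 0 \<or> w = 0" using uvw by auto
    then have "u = 0 \<and> v = 0 \<and> w = 0"
    proof (elim disjE)
      assume u: "u = 0"
      then have "w = 0" using r2 nz by simp
      moreover have "v = 0" using r1 nz \<open>w = 0\<close> by simp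
      ultimately show ?thesis using u by simp
    next
      assume v: "v = 0"
      then have "u = 0" using r3 nz by simp
      moreover have "w = 0" using r2 nz \<open>u = 0\<close> by simp
      ultimately show ?thesis using v by simp
    next
      assume w: "w = 0"
      then have "v = 0" using r1 nz by simp
      moreover have "u = 0" using r3 nz \<open>v = 0\<close> by simp
      ultimately show ?thesis using w by simp
    qed
    then show False using uvw by simp
  qed
  have "v * (X * Z) = w * (Z * Z)" using r1 by (simp add: algebra_simps)
  moreover have "w * (Z * Z) > 0" using pos nz by (auto simp: zero_less_mult_iff linorder_neq_iff)
  ultimately have "v * (X * Z) > 0" by linarith
  then have XZ: "X * Z > 0" using pos zero_less_mult_iff[of v "X * Z"] by auto
  have "w * (Y * X) = u * (X * X)" using r2 by (simp add: algebra_simps)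
  moreover have "u * (X * X) > 0" using pos nz by (auto simp: zero_less_mult_iff linorder_neq_iff)
  ultimately have "w * (Y * X) > 0" by linarith
  then have "Y * X > 0" using pos zero_less_mult_iff[of w "Y * X"] by auto
  then have XY: "X * Y > 0" by (simp add: mult.commute)
  have "Y * Z > 0" using XZ XY by (auto simp: zero_less_mult_iff)
  then show ?thesis using XY unfolding X_def Y_def Z_def a_def b_def c_def by simp
qed


lemma cr_0 [simp]: "cr 0 v = 0" "cr u 0 = 0" "cr u u = 0"
  by (simp_all add: cr_def)

lemma sign3: "(x::real) * y > 0 \<Longrightarrow> y * z > 0 \<Longrightarrow> z * x > 0"
  by (auto simp: zero_less_mult_iff)

lemma ratio_pos: "(r::real) > 0 \<Longrightarrow> Re (of_real r * w) / cmod (of_real r * w) = Re w / cmod w"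
  by (simp add: norm_mult)

lemma ang_q: "ang X V Y = arccos (Re ((Y - V) * cnj (X - V)) / cmod ((Y - V) * cnj (X - V)))"
  by (simp add: ang_def vangle_q)

lemma ang_eqD: "ang X V Y = ang X' V' Y' \<Longrightarrow>
  Re ((Y - V) * cnj (X - V)) / cmod ((Y - V) * cnj (X - V)) = Re ((Y' - V') * cnj (X' - V')) / cmod ((Y' - V') * cnj (X' - V'))"
  unfolding ang_q by (rule arccos_div_eq)

lemma brocard1_rho:
  assumes fb: "first_brocard P A B C"
    and off: "cr (A - P) (B - P) \<noteq> 0" "cr (B - P) (C - P) \<noteq> 0" "cr (C - P) (A - P) \<noteq> 0"
  shows "\<exists>\<rho>. pd (B - P) (C - P) = \<rho> * (B - P) \<and> pd (C - P) (A - P) = \<rho> * (C - P) \<and> pd (A - P) (B - P) = \<rho> * (A - P)"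
proof -
  define a b c where "a = A - P" and "b = B - P" and "c = C - P"
  have inh: "P \<in> convex hull {A, B, C}" using fb interior_subset unfolding first_brocard_def by blast
  have sg: "cr a b * cr b c > 0" "cr b c * cr c a > 0"
    using hull_signs[OF inh off] unfolding a_def b_def c_def by auto
  have nz: "a \<noteq> 0" "b \<noteq> 0" "c \<noteq> 0" "a \<noteq> b" "b \<noteq> c" "c \<noteq> a"
    using off unfolding a_def b_def c_def by auto
  define qA qB qC where "qA = a * cnj (b - a)" and "qB = b * cnj (c - b)" and "qC = c * cnj (a - c)"
  have e1: "Re (- qA) / cmod (- qA) = Re (- qB) / cmod (- qB)"
    using ang_eqD[of B A P C B P] fb unfolding first_brocard_def qA_def qB_def a_def b_def c_def
    by (simp add: algebra_simps)
  have e2: "Re (- qB) / cmod (- qB) = Re (- qC) / cmod (- qC)"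
    using ang_eqD[of C B P A C P] fb unfolding first_brocard_def qC_def qB_def a_def b_def c_def
    by (simp add: algebra_simps)
  have i1: "Im (- qA) * Im (- qB) > 0" using sg unfolding qA_def qB_def by (simp add: cr_def algebra_simps)
  have i2: "Im (- qB) * Im (- qC) > 0" using sg unfolding qC_def qB_def by (simp add: cr_def algebra_simps)
  have q0: "- qA \<noteq> 0" "- qB \<noteq> 0" "- qC \<noteq> 0" using nz unfolding qA_def qB_def qC_def by auto
  have d1: "cnj qA / qA = cnj qB / qB" using dir_eq[OF q0(1) q0(2) e1 i1] by simp
  have d2: "cnj qB / qB = cnj qC / qC" using dir_eq[OF q0(2) q0(3) e2 i2] by simp
  define \<rho> where "\<rho> = (1 - cnj qB / qB) / 2"
  have "pd b c = \<rho> * b" using pd_over[OF nz(2) nz(5)] unfolding \<rho>_def qB_def by simp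
  moreover have "pd c a = \<rho> * c" using pd_over[OF nz(3) nz(6)] unfolding \<rho>_def d2 qC_def by simp
  moreover have "pd a b = \<rho> * a" using pd_over[OF nz(1) nz(4)] unfolding \<rho>_def d1[symmetric] qA_def by simp
  ultimately show ?thesis unfolding a_def b_def c_def by blast
qed

lemma brocard2_rho:
  assumes fb: "second_brocard P A B C"
    and off: "cr (A - P) (B - P) \<noteq> 0" "cr (B - P) (C - P) \<noteq> 0" "cr (C - P) (A - P) \<noteq> 0"
  shows "\<exists>\<rho>. pd (B - P) (C - P) = \<rho> * (C - P) \<and> pd (C - P) (A - P) = \<rho> * (A - P) \<and> pd (A - P) (B - P) = \<rho> * (B - P)"
proof -
  define a b c where "a = A - P" and "b = B - P" and "c = C - P"
  have inh: "P \<in> convex hull {A, B, C}" using fb interior_subset unfolding second_brocard_def by blast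
  have sg: "cr a b * cr b c > 0" "cr b c * cr c a > 0"
    using hull_signs[OF inh off] unfolding a_def b_def c_def by auto
  have nz: "a \<noteq> 0" "b \<noteq> 0" "c \<noteq> 0" "a \<noteq> b" "b \<noteq> c" "c \<noteq> a"
    using off unfolding a_def b_def c_def by auto
  define qA qB qC where "qA = a * cnj (c - a)" and "qB = b * cnj (a - b)" and "qC = c * cnj (b - c)"
  have e1: "Re qA / cmod qA = Re qB / cmod qB"
  proof -
    have eqs: "(C - A) * cnj (P - A) = - cnj qA" "(A - B) * cnj (P - B) = - cnj qB"
      unfolding qA_def qB_def a_def b_def c_def by (simp_all add: algebra_simps)
    have "Re (- cnj qA) / cmod (- cnj qA) = Re (- cnj qB) / cmod (- cnj qB)"
      using ang_eqD[of P A C P B A, unfolded eqs] fb unfolding second_brocard_def by simp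
    then show ?thesis by (simp add: complex_mod_cnj)
  qed
  have e2: "Re qB / cmod qB = Re qC / cmod qC"
  proof -
    have eqs: "(A - B) * cnj (P - B) = - cnj qB" "(B - C) * cnj (P - C) = - cnj qC"
      unfolding qC_def qB_def a_def b_def c_def by (simp_all add: algebra_simps)
    have "Re (- cnj qB) / cmod (- cnj qB) = Re (- cnj qC) / cmod (- cnj qC)"
      using ang_eqD[of P B A P C B, unfolded eqs] fb unfolding second_brocard_def by simp
    then show ?thesis by (simp add: complex_mod_cnj)
  qed
  have im: "Im qA = cr c a" "Im qB = cr a b" "Im qC = cr b c"
    unfolding qA_def qB_def qC_def by (simp_all add: cr_def algebra_simps)
  have i1: "Im qA * Im qB > 0" using sign3[OF sg] unfolding im .
  have i2: "Im qB * Im qC > 0" using sg(1) unfolding im .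
  have q0: "qA \<noteq> 0" "qB \<noteq> 0" "qC \<noteq> 0" using nz unfolding qA_def qB_def qC_def by auto
  have d1: "cnj qA / qA = cnj qB / qB" using dir_eq[OF q0(1) q0(2) e1 i1] by simp
  have d2: "cnj qB / qB = cnj qC / qC" using dir_eq[OF q0(2) q0(3) e2 i2] by simp
  define \<rho> where "\<rho> = (1 - cnj qB / qB) / 2"
  have "pd b c = \<rho> * c" using pd_over[OF nz(3), of b] nz unfolding \<rho>_def d2 qC_def by (simp add: pd_sym)
  moreover have "pd c a = \<rho> * a" using pd_over[OF nz(1), of c] nz unfolding \<rho>_def d1[symmetric] qA_def by (simp add: pd_sym)
  moreover have "pd a b = \<rho> * b" using pd_over[OF nz(2), of a] nz unfolding \<rho>_def qB_def by (simp add: pd_sym)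
  ultimately show ?thesis unfolding a_def b_def c_def by blast
qed

lemma ang_scale:
  assumes "k \<noteq> 0"
  shows "ang (P + k * (X - P)) (P + k * (V - P)) (P + k * (Y - P)) = ang X V Y"
proof -
  have "(P + k * (Y - P) - (P + k * (V - P))) * cnj (P + k * (X - P) - (P + k * (V - P)))
        = (k * cnj k) * ((Y - V) * cnj (X - V))"
    by (simp add: algebra_simps)
  also have "k * cnj k = of_real ((cmod k)^2)" by (rule complex_norm_square[symmetric])
  finally have "(P + k * (Y - P) - (P + k * (V - P))) * cnj (P + k * (X - P) - (P + k * (V - P)))
        = of_real ((cmod k)^2) * ((Y - V) * cnj (X - V))" .
  moreover have "cmod k ^ 2 > 0" using assms by simp
  ultimately show ?thesis unfolding ang_q by (simp only: ratio_pos)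
qed

lemma interior_scale:
  fixes P A B C k :: complex
  assumes "k \<noteq> 0" "P \<in> interior (convex hull {A, B, C})"
  shows "P \<in> interior (convex hull {P + k * (A - P), P + k * (B - P), P + k * (C - P)})"
proof -
  define g where "g = (\<lambda>z. (P - k * P) + z) \<circ> (\<lambda>z. k * z)"
  have gi: "g z = P + k * (z - P)" for z unfolding g_def comp_def by (simp add: field_simps)
  have S: "{P + k * (A - P), P + k * (B - P), P + k * (C - P)} = (\<lambda>z. (P - k * P) + z) ` ((\<lambda>z. k * z) ` {A, B, C})"
    using gi unfolding g_def by auto
  have inj: "inj (\<lambda>z. k * z)" using assms(1) by (auto intro: injI)
  have "convex hull {P + k * (A - P), P + k * (B - P), P + k * (C - P)}
      = (\<lambda>z. (P - k * P) + z) ` ((\<lambda>z. k * z) ` (convex hull {A, B, C}))"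
    unfolding S convex_hull_translation convex_hull_linear_image[OF linear_times, symmetric] ..
  then have "interior (convex hull {P + k * (A - P), P + k * (B - P), P + k * (C - P)})
      = (\<lambda>z. (P - k * P) + z) ` ((\<lambda>z. k * z) ` interior (convex hull {A, B, C}))"
    by (simp add: interior_translation interior_injective_linear_image[OF linear_times inj])
  moreover have "P = (P - k * P) + k * P" by simp
  ultimately show ?thesis using assms(2) by (metis image_eqI)
qed

lemma fb_transfer:
  assumes "first_brocard P A B C" "k \<noteq> 0"
  shows "first_brocard P (P + k * (B - P)) (P + k * (C - P)) (P + k * (A - P))"
proof -
  have "P \<in> interior (convex hull {P + k * (A - P), P + k * (B - P), P + k * (C - P)})"
    using interior_scale assms unfolding first_brocard_def by blast
  moreover have "{P + k * (A - P), P + k * (B - P), P + k * (C - P)} = {P + k * (B - P), P + k * (C - P), P + k * (A - P)}"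
    by auto
  moreover have "P = P + k * (P - P)" by simp
  ultimately show ?thesis using assms unfolding first_brocard_def
    by (metis ang_scale)
qed

lemma sb_transfer:
  assumes "second_brocard P A B C" "k \<noteq> 0"
  shows "second_brocard P (P + k * (C - P)) (P + k * (A - P)) (P + k * (B - P))"
proof -
  have "P \<in> interior (convex hull {P + k * (A - P), P + k * (B - P), P + k * (C - P)})"
    using interior_scale assms unfolding second_brocard_def by blast
  moreover have "{P + k * (A - P), P + k * (B - P), P + k * (C - P)} = {P + k * (C - P), P + k * (A - P), P + k * (B - P)}"
    by auto
  moreover have "P = P + k * (P - P)" by simp
  ultimately show ?thesis using assms unfolding second_brocard_def
    by (metis ang_scale)
qed


lemma pd_eq: "u \<noteq> v \<Longrightarrow> pd u v * (2 * (cnj v - cnj u)) = u * cnj v - v * cnj u"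
  by (simp add: pd_def)
lemma cnj_pd_eq: "u \<noteq> v \<Longrightarrow> cnj (pd u v) * (2 * (v - u)) = cnj u * v - cnj v * u"
  by (simp add: pd_def)

lemma prod_lemma:
  assumes "a \<noteq> 0" "b \<noteq> c" "c \<noteq> a" "a \<noteq> b"
   and "pd c a \<noteq> pd a b"
  shows "pd (pd c a) (pd a b) = pd c a * pd a b / a"
proof -
  define a' where "a' = cnj a"
  define b' where "b' = cnj b"
  define c' where "c' = cnj c"
  define E where "E = pd c a"
  define F where "F = pd a b"
  define E' where "E' = cnj E"
  define F' where "F' = cnj F"
  define D where "D = pd E F"
  define K where "K = a' * (b - c) + b' * (c - a) + c' * (a - b)"
  have h1: "a' - c' \<noteq> 0" "b' - a' \<noteq> 0" "a - c \<noteq> 0" "b - a \<noteq> 0"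
    using assms by (auto simp: a'_def b'_def c'_def complex_cnj_cancel_iff)
  have E1: "E * (2 * (a' - c')) = c * a' - a * c'" unfolding E_def a'_def c'_def using assms by (intro pd_eq) auto
  have E2: "E' * (2 * (a - c)) = c' * a - a' * c" unfolding E'_def E_def a'_def c'_def using assms by (intro cnj_pd_eq) auto
  have F1: "F * (2 * (b' - a')) = a * b' - b * a'" unfolding F_def a'_def b'_def using assms by (intro pd_eq) auto
  have F2: "F' * (2 * (b - a)) = a' * b - b' * a" unfolding F'_def F_def a'_def b'_def using assms by (intro cnj_pd_eq) auto
  have EF: "E \<noteq> F" using assms E_def F_def by auto
  have D1: "D * (2 * (F' - E')) = E * F' - F * E'" unfolding D_def E'_def F'_def using EF by (intro pd_eq)
  have d1: "(F' - E') * (2 * (a - c) * (b - a)) = a * K"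
    unfolding K_def using E2 F2 by algebra
  have "F' - E' \<noteq> 0" using EF unfolding E'_def F'_def by (simp add: complex_cnj_cancel_iff)
  then have K0: "K \<noteq> 0" using d1 h1 by auto
  have d2: "(E * F' - F * E') * ((b - a) * (a - c)) = E * F * K"
    unfolding K_def using E1 E2 F1 F2 h1 by algebra
  have "D * a * K = E * F * K"
  proof -
    have "D * a * K * (2 * (a - c) * (b - a)) = D * (F' - E') * (2 * (a - c) * (b - a)) * (2 * (a - c) * (b - a))" using d1 by algebra
    also have "\<dots> = E * F * K * (2 * (a - c) * (b - a))" using D1 d2 by algebra
    finally show ?thesis using h1 by simp
  qed
  then have "D * a = E * F" using K0 by simp
  then show ?thesis using assms(1) unfolding D_def E_def F_def by (simp add: field_simps)
qed

lemma pd_scale: "pd (m * u) (m * v) = m * pd u v"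
proof (cases "m = 0")
  case False
  have "cr (m * u) (m * v) = (Re m ^ 2 + Im m ^ 2) * cr u v"
    by (simp add: cr_def algebra_simps power2_eq_square)
  also have "Re m ^ 2 + Im m ^ 2 = (cmod m)^2" by (simp add: cmod_power2)
  finally have "cr (m * u) (m * v) = (cmod m)^2 * cr u v" .
  moreover have "(of_real ((cmod m)^2 * cr u v) :: complex) = (m * cnj m) * of_real (cr u v)"
    by (subst of_real_mult) (simp only: complex_norm_square)
  ultimately have c: "(of_real (cr (m * u) (m * v)) :: complex) = (m * cnj m) * of_real (cr u v)" by simp
  have d: "cnj (m * v - m * u) = cnj m * cnj (v - u)" by (simp add: algebra_simps)
  show ?thesis unfolding pd_alt c d using False
    by (cases "v = u") (simp_all add: field_simps)
qed (simp add: pd_def)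

lemma side_formula:
  assumes "a \<noteq> b" "c \<noteq> a"
  shows "pd c a - pd a b = \<i> * of_real (cr (b - a) (c - a)) * cnj a / (cnj (a - c) * cnj (b - a))"
proof -
  have id: "of_real (cr c a) * (b - a) + of_real (cr a b) * (c - a) = - a * of_real (cr (b - a) (c - a))"
    by (simp add: cr_def complex_eq_iff algebra_simps)
  have "pd c a - pd a b = - \<i> * (of_real (cr c a) / cnj (a - c) - of_real (cr a b) / cnj (b - a))"
    by (simp add: pd_alt algebra_simps)
  also have "\<dots> = - \<i> * cnj (of_real (cr c a) * (b - a) + of_real (cr a b) * (c - a)) / (cnj (a - c) * cnj (b - a))"
    using assms by (simp add: field_simps)
  also have "\<dots> = \<i> * of_real (cr (b - a) (c - a)) * cnj a / (cnj (a - c) * cnj (b - a))"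
    unfolding id by simp
  finally show ?thesis .
qed

lemma cmod_cnj_diff [simp]: "cmod (cnj x - cnj y) = cmod (x - y)"
  by (metis complex_cnj_diff complex_mod_cnj)

lemma side_norm:
  assumes "a \<noteq> b" "c \<noteq> a"
  shows "cmod (pd c a - pd a b) = \<bar>cr (b - a) (c - a)\<bar> * cmod a / (cmod (a - c) * cmod (b - a))"
  unfolding side_formula[OF assms] by (simp add: norm_mult norm_divide)

lemma pd_norm: "b \<noteq> c \<Longrightarrow> cmod (pd b c) = \<bar>cr b c\<bar> / cmod (c - b)"
  by (simp add: pd_alt norm_mult norm_divide)


lemma sim_lab_scale:
  assumes "sim_labelled A B C X Y Z" "r > 0"
    "dist X' Y' = r * dist X Y" "dist Y' Z' = r * dist Y Z" "dist Z' X' = r * dist Z X"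
  shows "sim_labelled A B C X' Y' Z'"
proof -
  obtain k where k: "k > 0" "dist X Y = k * dist A B" "dist Y Z = k * dist B C" "dist Z X = k * dist C A"
    using assms(1) unfolding sim_labelled_def by auto
  show ?thesis unfolding sim_labelled_def
    by (rule exI[of _ "r * k"]) (use k assms in auto)
qed

lemma dist_scale: "dist (P + L * (X - P)) (P + L * (Y - P)) = cmod L * dist X Y"
proof -
  have "P + L * (X - P) - (P + L * (Y - P)) = L * (X - Y)" by (simp add: algebra_simps)
  then show ?thesis by (simp add: dist_norm norm_mult)
qed

lemma tri_sim_scale:
  assumes "tri_sim A B C X Y Z" "L \<noteq> 0"
  shows "tri_sim A B C (P + L * (X - P)) (P + L * (Y - P)) (P + L * (Z - P))"
proof -
  have r: "cmod L > 0" using assms(2) by simp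
  note d = dist_scale[of P L] dist_commute
  show ?thesis using assms(1) unfolding tri_sim_def
    by (elim disjE) (metis sim_lab_scale[OF _ r] d)+
qed

lemma tri_sim_rot:
  assumes "tri_sim B C A B' C' A'"
  shows "tri_sim A B C A' B' C'"
  using assms unfolding tri_sim_def sim_labelled_def
  by (elim disjE; (elim exE conjE)) (metis dist_commute)+

lemma tri_sim_refl: "tri_sim A B C A B C"
  unfolding tri_sim_def sim_labelled_def by (rule disjI1, rule exI[of _ 1]) simp


locale mchain =
  fixes A B C :: "nat \<Rightarrow> complex" and P :: complex
  assumes nondeg: "\<And>k. nondeg_triangle (A k) (B k) (C k)"
    and P_off: "\<And>k. \<not> on_line P (B k) (C k) \<and> \<not> on_line P (C k) (A k) \<and> \<not> on_line P (A k) (B k)"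
    and chain: "\<And>k. miquel_triangle P (A k) (B k) (C k) (A (Suc k)) (B (Suc k)) (C (Suc k))"
begin

definition a where "a k = A k - P"
definition b where "b k = B k - P"
definition c where "c k = C k - P"

lemma crs: "cr (a k) (b k) \<noteq> 0" "cr (b k) (c k) \<noteq> 0" "cr (c k) (a k) \<noteq> 0"
  using P_off[of k] unfolding off_cr a_def b_def c_def by auto

lemma nes: "a k \<noteq> 0" "b k \<noteq> 0" "c k \<noteq> 0" "a k \<noteq> b k" "b k \<noteq> c k" "c k \<noteq> a k"
  using crs[of k] by (auto)

lemma Kne: "cr (b k - a k) (c k - a k) \<noteq> 0"
  using nondeg[of k] unfolding nondeg_cr a_def b_def c_def by simp

lemma mu_ex: "\<exists>\<mu>. \<forall>k. \<mu> k \<noteq> 0 \<and> a (Suc k) = \<mu> k * pd (b k) (c k) \<and> b (Suc k) = \<mu> k * pd (c k) (a k)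
   \<and> c (Suc k) = \<mu> k * pd (a k) (b k)"
proof -
  have "\<forall>k. \<exists>m. m \<noteq> 0 \<and> a (Suc k) = m * pd (b k) (c k) \<and> b (Suc k) = m * pd (c k) (a k)
   \<and> c (Suc k) = m * pd (a k) (b k)"
    using miquel_spiral[OF nondeg _ _ _ chain] P_off unfolding a_def b_def c_def by blast
  then show ?thesis by (rule choice)
qed

definition mu where "mu = (SOME \<mu>. \<forall>k. \<mu> k \<noteq> 0 \<and> a (Suc k) = \<mu> k * pd (b k) (c k) \<and> b (Suc k) = \<mu> k * pd (c k) (a k)
   \<and> c (Suc k) = \<mu> k * pd (a k) (b k))"

lemma mu: "mu k \<noteq> 0" "a (Suc k) = mu k * pd (b k) (c k)" "b (Suc k) = mu k * pd (c k) (a k)"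
   "c (Suc k) = mu k * pd (a k) (b k)"
  using someI_ex[OF mu_ex] unfolding mu_def[symmetric] by blast+

lemma rel2:
  "a (Suc (Suc k)) * a k * mu k = mu (Suc k) * b (Suc k) * c (Suc k)"
  "b (Suc (Suc k)) * b k * mu k = mu (Suc k) * c (Suc k) * a (Suc k)"
  "c (Suc (Suc k)) * c k * mu k = mu (Suc k) * a (Suc k) * b (Suc k)"
proof -
  have m0: "mu k \<noteq> 0" by (rule mu)
  have n1: "pd (c k) (a k) \<noteq> pd (a k) (b k)" "pd (a k) (b k) \<noteq> pd (b k) (c k)" "pd (b k) (c k) \<noteq> pd (c k) (a k)"
    using nes[of "Suc k"] unfolding mu(2-4) by auto
  have p1: "pd (pd (c k) (a k)) (pd (a k) (b k)) = pd (c k) (a k) * pd (a k) (b k) / a k"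
    by (rule prod_lemma) (use nes n1 in auto)
  have p2: "pd (pd (a k) (b k)) (pd (b k) (c k)) = pd (a k) (b k) * pd (b k) (c k) / b k"
    by (rule prod_lemma) (use nes n1 in auto)
  have p3: "pd (pd (b k) (c k)) (pd (c k) (a k)) = pd (b k) (c k) * pd (c k) (a k) / c k"
    by (rule prod_lemma) (use nes n1 in auto)
  show "a (Suc (Suc k)) * a k * mu k = mu (Suc k) * b (Suc k) * c (Suc k)"
    unfolding mu(2)[of "Suc k"] mu(3)[of k] mu(4)[of k] pd_scale p1 using nes[of k] by (simp add: field_simps)
  show "b (Suc (Suc k)) * b k * mu k = mu (Suc k) * c (Suc k) * a (Suc k)"
    unfolding mu(3)[of "Suc k"] mu(4)[of k] mu(2)[of k] pd_scale p2 using nes[of k] by (simp add: field_simps)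
  show "c (Suc (Suc k)) * c k * mu k = mu (Suc k) * a (Suc k) * b (Suc k)"
    unfolding mu(4)[of "Suc k"] mu(2)[of k] mu(3)[of k] pd_scale p3 using nes[of k] by (simp add: field_simps)
qed

lemma triple: "\<exists>L. L \<noteq> 0 \<and> a (k + 3) = L * a k \<and> b (k + 3) = L * b k \<and> c (k + 3) = L * c k"
proof -
  define a0 b0 c0 a1 b1 c1 a2 b2 c2 a3 b3 c3 where "a0 = a k" "b0 = b k" "c0 = c k"
    "a1 = a (Suc k)" "b1 = b (Suc k)" "c1 = c (Suc k)" "a2 = a (Suc (Suc k))" "b2 = b (Suc (Suc k))" "c2 = c (Suc (Suc k))"
    "a3 = a (Suc (Suc (Suc k)))" "b3 = b (Suc (Suc (Suc k)))" "c3 = c (Suc (Suc (Suc k)))"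
  define m0 m1 m2 where "m0 = mu k" "m1 = mu (Suc k)" "m2 = mu (Suc (Suc k))"
  have nz: "a0 \<noteq> 0" "b0 \<noteq> 0" "c0 \<noteq> 0" "a1 \<noteq> 0" "b1 \<noteq> 0" "c1 \<noteq> 0" "m0 \<noteq> 0" "m1 \<noteq> 0" "m2 \<noteq> 0"
    using nes mu(1) unfolding a0_b0_c0_a1_b1_c1_a2_b2_c2_a3_b3_c3_def m0_m1_m2_def by auto
  have r0: "a2 * a0 * m0 = m1 * b1 * c1" "b2 * b0 * m0 = m1 * c1 * a1" "c2 * c0 * m0 = m1 * a1 * b1"
    using rel2[of k] unfolding a0_b0_c0_a1_b1_c1_a2_b2_c2_a3_b3_c3_def m0_m1_m2_def by auto
  have r1: "a3 * a1 * m1 = m2 * b2 * c2" "b3 * b1 * m1 = m2 * c2 * a2" "c3 * c1 * m1 = m2 * a2 * b2"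
    using rel2[of "Suc k"] unfolding a0_b0_c0_a1_b1_c1_a2_b2_c2_a3_b3_c3_def m0_m1_m2_def by auto
  define L where "L = m2 * m1 * a1 * b1 * c1 / (a0 * b0 * c0 * m0^2)"
  have e2: "a2 = m1 * b1 * c1 / (a0 * m0)" "b2 = m1 * c1 * a1 / (b0 * m0)" "c2 = m1 * a1 * b1 / (c0 * m0)"
    using r0 nz by (auto simp: field_simps)
  have "a3 = m2 * b2 * c2 / (a1 * m1)" "b3 = m2 * c2 * a2 / (b1 * m1)" "c3 = m2 * a2 * b2 / (c1 * m1)"
    using r1 nz by (auto simp: field_simps)
  then have "a3 = L * a0" "b3 = L * b0" "c3 = L * c0"
    unfolding e2 L_def using nz by (simp_all add: field_simps power2_eq_square)
  moreover have "L \<noteq> 0" unfolding L_def using nz by simp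
  moreover have "k + 3 = Suc (Suc (Suc k))" by simp
  ultimately show ?thesis unfolding a0_b0_c0_a1_b1_c1_a2_b2_c2_a3_b3_c3_def by metis
qed

lemma period: "\<exists>L. L \<noteq> 0 \<and> a (3 * m + r) = L * a r \<and> b (3 * m + r) = L * b r \<and> c (3 * m + r) = L * c r"
proof (induction m)
  case 0 then show ?case by (rule exI[of _ 1]) simp
next
  case (Suc m)
  then obtain L where L: "L \<noteq> 0" "a (3 * m + r) = L * a r" "b (3 * m + r) = L * b r" "c (3 * m + r) = L * c r" by blast
  obtain L' where L': "L' \<noteq> 0" "a (3 * m + r + 3) = L' * a (3 * m + r)" "b (3 * m + r + 3) = L' * b (3 * m + r)"
     "c (3 * m + r + 3) = L' * c (3 * m + r)" using triple by blast
  have e: "3 * Suc m + r = 3 * m + r + 3" by simp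
  show ?case unfolding e using L L' by (intro exI[of _ "L' * L"]) simp
qed

lemma period_sim:
  assumes "tri_sim (A 0) (B 0) (C 0) (A r) (B r) (C r)"
  shows "tri_sim (A 0) (B 0) (C 0) (A (3 * m + r)) (B (3 * m + r)) (C (3 * m + r))"
proof -
  obtain L where L: "L \<noteq> 0" "a (3 * m + r) = L * a r" "b (3 * m + r) = L * b r" "c (3 * m + r) = L * c r"
    using period by blast
  have "A (3 * m + r) = P + L * (A r - P)" "B (3 * m + r) = P + L * (B r - P)" "C (3 * m + r) = P + L * (C r - P)"
    using L unfolding a_def b_def c_def by (simp_all add: algebra_simps)
  then show ?thesis using tri_sim_scale[OF assms L(1)] by simp
qed

end


lemma cr_rot: "cr (c - b) (a - b) = cr (b - a) (c - a)" "cr (a - c) (b - c) = cr (b - a) (c - a)"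
  by (simp_all add: cr_def algebra_simps)

context mchain begin

definition Mk where "Mk k = cmod (mu k) * \<bar>cr (b k - a k) (c k - a k)\<bar> / (cmod (a k - c k) * cmod (b k - a k) * cmod (c k - b k))"

lemma Mk_pos: "Mk k > 0"
  unfolding Mk_def using mu(1)[of k] Kne[of k] nes[of k] by (auto intro!: divide_pos_pos mult_pos_pos)

lemma sides1:
  "dist (B (Suc k)) (C (Suc k)) = Mk k * cmod (a k) * dist (B k) (C k)"
  "dist (C (Suc k)) (A (Suc k)) = Mk k * cmod (b k) * dist (C k) (A k)"
  "dist (A (Suc k)) (B (Suc k)) = Mk k * cmod (c k) * dist (A k) (B k)"
proof -
  have d: "dist (B j) (C j) = cmod (c j - b j)" "dist (C j) (A j) = cmod (a j - c j)" "dist (A j) (B j) = cmod (b j - a j)" for j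
    unfolding a_def b_def c_def dist_norm by (simp_all add: norm_minus_commute)
  have n: "cmod (a k - c k) > 0" "cmod (b k - a k) > 0" "cmod (c k - b k) > 0" using nes[of k] by auto
  have s1: "cmod (pd (c k) (a k) - pd (a k) (b k)) = \<bar>cr (b k - a k) (c k - a k)\<bar> * cmod (a k) / (cmod (a k - c k) * cmod (b k - a k))"
    using side_norm nes by auto
  have s2: "cmod (pd (a k) (b k) - pd (b k) (c k)) = \<bar>cr (b k - a k) (c k - a k)\<bar> * cmod (b k) / (cmod (b k - a k) * cmod (c k - b k))"
    using side_norm[of "b k" "c k" "a k"] nes unfolding cr_rot by auto
  have s3: "cmod (pd (b k) (c k) - pd (c k) (a k)) = \<bar>cr (b k - a k) (c k - a k)\<bar> * cmod (c k) / (cmod (c k - b k) * cmod (a k - c k))"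
    using side_norm[of "c k" "a k" "b k"] nes unfolding cr_rot by auto
  have e1: "c (Suc k) - b (Suc k) = - mu k * (pd (c k) (a k) - pd (a k) (b k))" unfolding mu(3,4) by (simp add: algebra_simps)
  have e2: "a (Suc k) - c (Suc k) = - mu k * (pd (a k) (b k) - pd (b k) (c k))" unfolding mu(2,4) by (simp add: algebra_simps)
  have e3: "b (Suc k) - a (Suc k) = - mu k * (pd (b k) (c k) - pd (c k) (a k))" unfolding mu(2,3) by (simp add: algebra_simps)
  have f1: "cmod (c (Suc k) - b (Suc k)) = cmod (mu k) * cmod (pd (c k) (a k) - pd (a k) (b k))"
    by (simp only: e1 norm_mult norm_minus_cancel)
  have f2: "cmod (a (Suc k) - c (Suc k)) = cmod (mu k) * cmod (pd (a k) (b k) - pd (b k) (c k))"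
    by (simp only: e2 norm_mult norm_minus_cancel)
  have f3: "cmod (b (Suc k) - a (Suc k)) = cmod (mu k) * cmod (pd (b k) (c k) - pd (c k) (a k))"
    by (simp only: e3 norm_mult norm_minus_cancel)
  show "dist (B (Suc k)) (C (Suc k)) = Mk k * cmod (a k) * dist (B k) (C k)"
    unfolding d f1 s1 Mk_def using n by (simp add: field_simps)
  show "dist (C (Suc k)) (A (Suc k)) = Mk k * cmod (b k) * dist (C k) (A k)"
    unfolding d f2 s2 Mk_def using n by (simp add: field_simps)
  show "dist (A (Suc k)) (B (Suc k)) = Mk k * cmod (c k) * dist (A k) (B k)"
    unfolding d f3 s3 Mk_def using n by (simp add: field_simps)
qed

lemma sides2:
  "dist (B 2) (C 2) = Mk 1 * Mk 0 * cmod (mu 0) * \<bar>cr (b 0) (c 0)\<bar> * cmod (a 0)"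
  "dist (C 2) (A 2) = Mk 1 * Mk 0 * cmod (mu 0) * \<bar>cr (c 0) (a 0)\<bar> * cmod (b 0)"
  "dist (A 2) (B 2) = Mk 1 * Mk 0 * cmod (mu 0) * \<bar>cr (a 0) (b 0)\<bar> * cmod (c 0)"
proof -
  have d: "dist (B 0) (C 0) = cmod (c 0 - b 0)" "dist (C 0) (A 0) = cmod (a 0 - c 0)" "dist (A 0) (B 0) = cmod (b 0 - a 0)"
    unfolding a_def b_def c_def dist_norm by (simp_all add: norm_minus_commute)
  have n: "cmod (a 0 - c 0) > 0" "cmod (b 0 - a 0) > 0" "cmod (c 0 - b 0) > 0" using nes[of 0] by auto
  have a1: "cmod (a 1) = cmod (mu 0) * (\<bar>cr (b 0) (c 0)\<bar> / cmod (c 0 - b 0))"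
    using mu(2)[of 0] pd_norm[of "b 0" "c 0"] nes[of 0] by (simp add: norm_mult)
  have b1: "cmod (b 1) = cmod (mu 0) * (\<bar>cr (c 0) (a 0)\<bar> / cmod (a 0 - c 0))"
    using mu(3)[of 0] pd_norm[of "c 0" "a 0"] nes[of 0] by (simp add: norm_mult)
  have c1: "cmod (c 1) = cmod (mu 0) * (\<bar>cr (a 0) (b 0)\<bar> / cmod (b 0 - a 0))"
    using mu(4)[of 0] pd_norm[of "a 0" "b 0"] nes[of 0] by (simp add: norm_mult)
  have two: "(2::nat) = Suc 1" "(1::nat) = Suc 0" by simp_all
  show "dist (B 2) (C 2) = Mk 1 * Mk 0 * cmod (mu 0) * \<bar>cr (b 0) (c 0)\<bar> * cmod (a 0)"
    unfolding two(1) sides1 unfolding two(2)[symmetric] unfolding two(2) sides1 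
    unfolding two(2)[symmetric] a1 d using n by (simp add: field_simps)
  show "dist (C 2) (A 2) = Mk 1 * Mk 0 * cmod (mu 0) * \<bar>cr (c 0) (a 0)\<bar> * cmod (b 0)"
    unfolding two(1) sides1 unfolding two(2)[symmetric] unfolding two(2) sides1 
    unfolding two(2)[symmetric] b1 d using n by (simp add: field_simps)
  show "dist (A 2) (B 2) = Mk 1 * Mk 0 * cmod (mu 0) * \<bar>cr (a 0) (b 0)\<bar> * cmod (c 0)"
    unfolding two(1) sides1 unfolding two(2)[symmetric] unfolding two(2) sides1 
    unfolding two(2)[symmetric] c1 d using n by (simp add: field_simps)
qed

lemma dist0: "dist (A 0) (B 0) = cmod (a 0 - b 0)" "dist (B 0) (C 0) = cmod (b 0 - c 0)" "dist (C 0) (A 0) = cmod (c 0 - a 0)"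
  unfolding a_def b_def c_def dist_norm by simp_all

lemma O_case:
  assumes "is_circumcenter P (A 0) (B 0) (C 0)"
  shows "tri_sim (A 0) (B 0) (C 0) (A 1) (B 1) (C 1)"
proof -
  have r: "cmod (a 0) = cmod (b 0)" "cmod (c 0) = cmod (b 0)"
    using assms unfolding is_circumcenter_def a_def b_def c_def dist_norm by (simp_all add: norm_minus_commute)
  have "sim_labelled (A 0) (B 0) (C 0) (A 1) (B 1) (C 1)"
    unfolding sim_labelled_def
    apply (rule exI[of _ "Mk 0 * cmod (b 0)"])
    using sides1[of 0] r Mk_pos[of 0] nes[of 0] by (simp add: dist_commute)
  then show ?thesis unfolding tri_sim_def by blast
qed

lemma S_alg_case:
  assumes "a 0 ^ 2 = b 0 * c 0"
  shows "tri_sim (A 0) (B 0) (C 0) (A 1) (B 1) (C 1)"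
proof -
  have "b 0 * (c 0 - a 0) = a 0 * (a 0 - b 0)" "c 0 * (a 0 - b 0) = a 0 * (c 0 - a 0)"
    using assms by (simp_all add: algebra_simps power2_eq_square)
  then have r: "cmod (b 0) * dist (C 0) (A 0) = cmod (a 0) * dist (A 0) (B 0)"
       "cmod (c 0) * dist (A 0) (B 0) = cmod (a 0) * dist (C 0) (A 0)"
    unfolding dist0 by (metis norm_mult norm_minus_commute)+
  have "sim_labelled (A 0) (B 0) (C 0) (A 1) (C 1) (B 1)"
    unfolding sim_labelled_def
    apply (rule exI[of _ "Mk 0 * cmod (a 0)"])
    using sides1[of 0] r Mk_pos[of 0] nes[of 0] by (simp add: dist_commute)
  then show ?thesis unfolding tri_sim_def by blast
qed

end


lemma perp_identity:
  assumes "inner a (b - c) = 0"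
  shows "(cr b c)^2 * (cmod a)^2 = (inner a b)^2 * (cmod (b - c))^2"
proof -
  obtain a1 a2 where a: "a = Complex a1 a2" by (metis complex.exhaust)
  obtain b1 b2 where b: "b = Complex b1 b2" by (metis complex.exhaust)
  obtain c1 c2 where c: "c = Complex c1 c2" by (metis complex.exhaust)
  have h: "a1 * (b1 - c1) + a2 * (b2 - c2) = 0" using assms unfolding a b c by (simp add: inner_complex_def)
  have "(b1 * c2 - b2 * c1)^2 * (a1^2 + a2^2) = (a1 * b1 + a2 * b2)^2 * ((b1 - c1)^2 + (b2 - c2)^2)"
    using h by algebra
  then show ?thesis unfolding a b c by (simp add: cr_def inner_complex_def cmod_power2)
qed

lemma abs_eq_of_sq: "(x::real)^2 = y^2 \<Longrightarrow> \<bar>x\<bar> = \<bar>y\<bar>"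
  by (metis power2_abs abs_ge_zero power2_eq_iff_nonneg)

lemma sim_lab_refl: "sim_labelled A B C A B C"
  unfolding sim_labelled_def by (rule exI[of _ 1]) simp
lemma tri_sim_cyc1: "tri_sim A B C B C A"
  unfolding tri_sim_def using sim_lab_refl by blast
lemma tri_sim_cyc2: "tri_sim A B C C A B"
  unfolding tri_sim_def using sim_lab_refl by blast

context mchain begin

lemma H_case:
  assumes "is_orthocenter P (A 0) (B 0) (C 0)"
  shows "tri_sim (A 0) (B 0) (C 0) (A 2) (B 2) (C 2)"
proof -
  define x y z where "x = a 0" "y = b 0" "z = c 0"
  have h1: "inner x (y - z) = 0" "inner y (z - x) = 0"
    using assms unfolding is_orthocenter_def x_y_z_def a_def b_def c_def
    by (simp_all add: inner_diff_left inner_diff_right algebra_simps)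
  have h3: "inner z (x - y) = 0" using h1 by (simp add: inner_diff_right inner_commute algebra_simps)
  define \<sigma> where "\<sigma> = inner x y"
  have s: "inner y z = \<sigma>" "inner z x = \<sigma>" using h1 unfolding \<sigma>_def
    by (simp_all add: inner_diff_right inner_commute algebra_simps)
  have p1: "\<bar>cr y z\<bar> * cmod x = \<bar>\<sigma>\<bar> * cmod (y - z)"
    using abs_eq_of_sq[of "cr y z * cmod x" "\<sigma> * cmod (y - z)"] perp_identity[OF h1(1)] unfolding \<sigma>_def
    by (simp add: abs_mult power_mult_distrib)
  have p2: "\<bar>cr z x\<bar> * cmod y = \<bar>\<sigma>\<bar> * cmod (z - x)"
    using abs_eq_of_sq[of "cr z x * cmod y" "\<sigma> * cmod (z - x)"] perp_identity[OF h1(2)] s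
    by (simp add: abs_mult power_mult_distrib)
  have p3: "\<bar>cr x y\<bar> * cmod z = \<bar>\<sigma>\<bar> * cmod (x - y)"
    using abs_eq_of_sq[of "cr x y * cmod z" "\<sigma> * cmod (x - y)"] perp_identity[OF h3] s
    by (simp add: abs_mult power_mult_distrib)
  have "\<bar>cr y z\<bar> * cmod x > 0" using crs[of 0] nes[of 0] unfolding x_y_z_def by simp
  then have sp: "\<bar>\<sigma>\<bar> > 0" using p1 by (metis abs_ge_zero mult_eq_0_iff order_less_le)
  define r where "r = Mk 1 * Mk 0 * cmod (mu 0) * \<bar>\<sigma>\<bar>"
  have rp: "r > 0" unfolding r_def using Mk_pos mu(1) sp by simp
  have "sim_labelled (A 0) (B 0) (C 0) (A 2) (B 2) (C 2)"
    unfolding sim_labelled_def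
  proof (rule exI[of _ r], intro conjI)
    show "dist (A 2) (B 2) = r * dist (A 0) (B 0)" unfolding sides2 dist0 r_def
      using p3 unfolding x_y_z_def by (simp add: algebra_simps)
    show "dist (B 2) (C 2) = r * dist (B 0) (C 0)" unfolding sides2 dist0 r_def
      using p1 unfolding x_y_z_def by (simp add: algebra_simps)
    show "dist (C 2) (A 2) = r * dist (C 0) (A 0)" unfolding sides2 dist0 r_def
      using p2 unfolding x_y_z_def by (simp add: algebra_simps)
  qed (rule rp)
  then show ?thesis unfolding tri_sim_def by blast
qed

lemma M_alg_case:
  assumes R1: "(cr (b 0) (c 0))^2 * (cmod (a 0))^2 * (cmod (a 0 - b 0))^2 = (cr (c 0) (a 0))^2 * (cmod (b 0))^2 * (cmod (b 0 - c 0))^2"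
    and R2: "(cr (b 0) (c 0))^2 * (cmod (a 0))^2 * (cmod (c 0 - a 0))^2 = (cr (a 0) (b 0))^2 * (cmod (c 0))^2 * (cmod (b 0 - c 0))^2"
  shows "tri_sim (A 0) (B 0) (C 0) (A 2) (B 2) (C 2)"
proof -
  define x y z where "x = a 0" "y = b 0" "z = c 0"
  have q1: "\<bar>cr y z\<bar> * cmod x * cmod (x - y) = \<bar>cr z x\<bar> * cmod y * cmod (y - z)"
    using abs_eq_of_sq[of "cr y z * cmod x * cmod (x - y)" "cr z x * cmod y * cmod (y - z)"] R1
    unfolding x_y_z_def by (simp add: abs_mult power_mult_distrib)
  have q2: "\<bar>cr y z\<bar> * cmod x * cmod (z - x) = \<bar>cr x y\<bar> * cmod z * cmod (y - z)"
    using abs_eq_of_sq[of "cr y z * cmod x * cmod (z - x)" "cr x y * cmod z * cmod (y - z)"] R2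
    unfolding x_y_z_def by (simp add: abs_mult power_mult_distrib)
  have yz: "cmod (y - z) > 0" unfolding x_y_z_def using nes[of 0] by simp
  define \<tau> where "\<tau> = \<bar>cr y z\<bar> * cmod x / cmod (y - z)"
  have t1: "\<bar>cr y z\<bar> * cmod x = \<tau> * cmod (y - z)" unfolding \<tau>_def using yz by simp
  have t2: "\<bar>cr z x\<bar> * cmod y = \<tau> * cmod (x - y)" unfolding \<tau>_def using yz q1 by (simp add: field_simps)
  have t3: "\<bar>cr x y\<bar> * cmod z = \<tau> * cmod (z - x)" unfolding \<tau>_def using yz q2 by (simp add: field_simps)
  have "\<bar>cr y z\<bar> * cmod x > 0" using crs[of 0] nes[of 0] unfolding x_y_z_def by simp
  then have tp: "\<tau> > 0" unfolding \<tau>_def using yz by simp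
  define r where "r = Mk 1 * Mk 0 * cmod (mu 0) * \<tau>"
  have rp: "r > 0" unfolding r_def using Mk_pos mu(1) tp by simp
  have "sim_labelled (A 0) (B 0) (C 0) (A 2) (C 2) (B 2)"
    unfolding sim_labelled_def
  proof (rule exI[of _ r], intro conjI)
    show "dist (A 2) (C 2) = r * dist (A 0) (B 0)" unfolding dist_commute[of "A 2"] sides2 dist0 r_def
      using t2 unfolding x_y_z_def by (simp add: algebra_simps)
    show "dist (C 2) (B 2) = r * dist (B 0) (C 0)" unfolding dist_commute[of "C 2"] sides2 dist0 r_def
      using t1 unfolding x_y_z_def by (simp add: algebra_simps)
    show "dist (B 2) (A 2) = r * dist (C 0) (A 0)" unfolding dist_commute[of "B 2"] sides2 dist0 r_def
      using t3 unfolding x_y_z_def by (simp add: algebra_simps)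
  qed (rule rp)
  then show ?thesis unfolding tri_sim_def by blast
qed

definition rotinv where "rotinv k \<longleftrightarrow> (\<exists>L. L \<noteq> 0 \<and>
    ((a k = L * a 0 \<and> b k = L * b 0 \<and> c k = L * c 0) \<or>
     (a k = L * b 0 \<and> b k = L * c 0 \<and> c k = L * a 0) \<or>
     (a k = L * c 0 \<and> b k = L * a 0 \<and> c k = L * b 0)))"

lemma rotinv_sim: "rotinv k \<Longrightarrow> tri_sim (A 0) (B 0) (C 0) (A k) (B k) (C k)"
proof -
  assume "rotinv k"
  then obtain L where L: "L \<noteq> 0" and cs: "(a k = L * a 0 \<and> b k = L * b 0 \<and> c k = L * c 0) \<or>
     (a k = L * b 0 \<and> b k = L * c 0 \<and> c k = L * a 0) \<or>
     (a k = L * c 0 \<and> b k = L * a 0 \<and> c k = L * b 0)" unfolding rotinv_def by blast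
  have e: "X = P + L * (Y - P)" if "X - P = L * (Y - P)" for X Y using that by (simp add: algebra_simps)
  from cs show ?thesis
  proof (elim disjE conjE)
    assume h: "a k = L * a 0" "b k = L * b 0" "c k = L * c 0"
    show ?thesis using tri_sim_scale[OF tri_sim_refl L, of "A 0" "B 0" "C 0" P] h e unfolding a_def b_def c_def by metis
  next
    assume h: "a k = L * b 0" "b k = L * c 0" "c k = L * a 0"
    show ?thesis using tri_sim_scale[OF tri_sim_cyc1 L, of "A 0" "B 0" "C 0" P] h e unfolding a_def b_def c_def by metis
  next
    assume h: "a k = L * c 0" "b k = L * a 0" "c k = L * b 0"
    show ?thesis using tri_sim_scale[OF tri_sim_cyc2 L, of "A 0" "B 0" "C 0" P] h e unfolding a_def b_def c_def by metis
  qed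
qed

lemma rotinv_step1:
  assumes "rotinv k" "\<kappa> \<noteq> 0" "a (Suc k) = \<kappa> * b k" "b (Suc k) = \<kappa> * c k" "c (Suc k) = \<kappa> * a k"
  shows "rotinv (Suc k)"
proof -
  obtain L where L: "L \<noteq> 0" and cs: "(a k = L * a 0 \<and> b k = L * b 0 \<and> c k = L * c 0) \<or>
     (a k = L * b 0 \<and> b k = L * c 0 \<and> c k = L * a 0) \<or>
     (a k = L * c 0 \<and> b k = L * a 0 \<and> c k = L * b 0)" using assms(1) unfolding rotinv_def by blast
  show ?thesis unfolding rotinv_def
    by (rule exI[of _ "\<kappa> * L"]) (use cs assms L in auto)
qed

lemma rotinv_step2:
  assumes "rotinv k" "\<kappa> \<noteq> 0" "a (Suc k) = \<kappa> * c k" "b (Suc k) = \<kappa> * a k" "c (Suc k) = \<kappa> * b k"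
  shows "rotinv (Suc k)"
proof -
  obtain L where L: "L \<noteq> 0" and cs: "(a k = L * a 0 \<and> b k = L * b 0 \<and> c k = L * c 0) \<or>
     (a k = L * b 0 \<and> b k = L * c 0 \<and> c k = L * a 0) \<or>
     (a k = L * c 0 \<and> b k = L * a 0 \<and> c k = L * b 0)" using assms(1) unfolding rotinv_def by blast
  show ?thesis unfolding rotinv_def
    by (rule exI[of _ "\<kappa> * L"]) (use cs assms L in auto)
qed

lemma fb_all:
  assumes "first_brocard P (A 0) (B 0) (C 0)"
  shows "first_brocard P (A k) (B k) (C k) \<and> rotinv k"
proof (induction k)
  case 0 then show ?case using assms unfolding rotinv_def by (intro conjI exI[of _ 1]) auto
next
  case (Suc k)
  then have fb: "first_brocard P (A k) (B k) (C k)" and ri: "rotinv k" by auto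
  obtain \<rho> where \<rho>: "pd (b k) (c k) = \<rho> * b k" "pd (c k) (a k) = \<rho> * c k" "pd (a k) (b k) = \<rho> * a k"
    using brocard1_rho[OF fb] crs unfolding a_def b_def c_def by blast
  have "\<rho> \<noteq> 0" using \<rho>(1) pd_nz[OF nes(5) crs(2)] by auto
  then have k0: "mu k * \<rho> \<noteq> 0" using mu(1) by simp
  have s: "a (Suc k) = (mu k * \<rho>) * b k" "b (Suc k) = (mu k * \<rho>) * c k" "c (Suc k) = (mu k * \<rho>) * a k"
    using mu(2-4)[of k] \<rho> by simp_all
  have "A (Suc k) = P + (mu k * \<rho>) * (B k - P)" "B (Suc k) = P + (mu k * \<rho>) * (C k - P)" "C (Suc k) = P + (mu k * \<rho>) * (A k - P)"
    using s unfolding a_def b_def c_def by (simp_all add: algebra_simps)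
  then have "first_brocard P (A (Suc k)) (B (Suc k)) (C (Suc k))" using fb_transfer[OF fb k0] by simp
  then show ?case using rotinv_step1[OF ri k0 s] by simp
qed

lemma sb_all:
  assumes "second_brocard P (A 0) (B 0) (C 0)"
  shows "second_brocard P (A k) (B k) (C k) \<and> rotinv k"
proof (induction k)
  case 0 then show ?case using assms unfolding rotinv_def by (intro conjI exI[of _ 1]) auto
next
  case (Suc k)
  then have fb: "second_brocard P (A k) (B k) (C k)" and ri: "rotinv k" by auto
  obtain \<rho> where \<rho>: "pd (b k) (c k) = \<rho> * c k" "pd (c k) (a k) = \<rho> * a k" "pd (a k) (b k) = \<rho> * b k"
    using brocard2_rho[OF fb] crs unfolding a_def b_def c_def by blast
  have "\<rho> \<noteq> 0" using \<rho>(1) pd_nz[OF nes(5) crs(2)] by auto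
  then have k0: "mu k * \<rho> \<noteq> 0" using mu(1) by simp
  have s: "a (Suc k) = (mu k * \<rho>) * c k" "b (Suc k) = (mu k * \<rho>) * a k" "c (Suc k) = (mu k * \<rho>) * b k"
    using mu(2-4)[of k] \<rho> by simp_all
  have "A (Suc k) = P + (mu k * \<rho>) * (C k - P)" "B (Suc k) = P + (mu k * \<rho>) * (A k - P)" "C (Suc k) = P + (mu k * \<rho>) * (B k - P)"
    using s unfolding a_def b_def c_def by (simp_all add: algebra_simps)
  then have "second_brocard P (A (Suc k)) (B (Suc k)) (C (Suc k))" using sb_transfer[OF fb k0] by simp
  then show ?case using rotinv_step2[OF ri k0 s] by simp
qed

end


lemma sq_norm: "(cmod z)^2 = Re z ^2 + Im z ^2" by (simp add: cmod_power2)

lemma si_core: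
  fixes u w q :: complex
  assumes h1: "cmod (q - u) = cmod (q - w)" and h2: "cmod (q - w) = cmod (q + w)" and u0: "u \<noteq> 0"
  shows "2 * inner (u - q) (- u) / inner (- u) (- u) = - 1 - (cmod w)^2 / (cmod u)^2"
proof -
  have a1: "inner (q - u) (q - u) = inner (q - w) (q - w)" using h1 by (metis power2_norm_eq_inner)
  have a2: "inner (q - w) (q - w) = inner (q + w) (q + w)" using h2 by (metis power2_norm_eq_inner)
  have b1: "inner q q - 2 * inner q u + inner u u = inner q q - 2 * inner q w + inner w w"
    using a1 by (simp add: inner_diff_left inner_diff_right inner_commute)
  have b2: "inner q w = 0"
    using a2 by (simp add: inner_diff_left inner_diff_right inner_add_left inner_add_right inner_commute)
  have uu: "inner u u > 0" using u0 by simp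
  have "2 * inner (u - q) (- u) = - 2 * inner u u + 2 * inner q u"
    by (simp add: inner_diff_left inner_diff_right inner_commute algebra_simps)
  also have "\<dots> = - inner u u - inner w w" using b1 b2 by simp
  finally have "2 * inner (u - q) (- u) / inner (- u) (- u) = (- inner u u - inner w w) / inner u u" by simp
  also have "\<dots> = - 1 - inner w w / inner u u" using uu by (simp add: field_simps)
  finally show ?thesis by (simp add: power2_norm_eq_inner)
qed

lemma si_acute:
  fixes E u w q :: complex
  assumes h1: "cmod (q - u) = cmod (q - w)" and h2: "cmod (q - w) = cmod (q + w)" and u0: "u \<noteq> 0"
  shows "second_inter (E + u) (- u) (E + q) = E - of_real ((cmod w)^2 / (cmod u)^2) * u"
proof -
  have "second_inter (E + u) (- u) (E + q) = E + u + (2 * inner (u - q) (- u) / inner (- u) (- u)) *\<^sub>R u"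
    unfolding second_inter_def by (simp add: algebra_simps)
  also have "\<dots> = E - of_real ((cmod w)^2 / (cmod u)^2) * u"
    unfolding si_core[OF assms] by (simp add: scaleR_conv_of_real algebra_simps)
  finally show ?thesis .
qed

lemma si_obtuse:
  fixes E u w q :: complex
  assumes h1: "cmod (q + u) = cmod (q - w)" and h2: "cmod (q - w) = cmod (q + w)" and u0: "u \<noteq> 0"
  shows "second_inter (E - u) u (E + q) = E + of_real ((cmod w)^2 / (cmod u)^2) * u"
proof -
  have n1: "cmod ((- q) - u) = cmod (q + u)" "cmod ((- q) - w) = cmod (q + w)" "cmod ((- q) + w) = cmod (q - w)"
    by (simp_all add: norm_minus_commute[of "- q" u, symmetric] norm_minus_commute[of "- q" w, symmetric])
       (metis add.commute diff_minus_eq_add minus_diff_eq norm_minus_cancel)+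
  have h1': "cmod ((- q) - u) = cmod ((- q) - w)" using h1 h2 n1 by simp
  have h2': "cmod ((- q) - w) = cmod ((- q) + w)" using h2 n1 by simp
  have "second_inter (E - u) u (E + q) = E - u - (2 * inner (- u - q) u / inner u u) *\<^sub>R u"
    unfolding second_inter_def by (simp add: algebra_simps)
  also have "2 * inner (- u - q) u / inner u u = 2 * inner (u - (- q)) (- u) / inner (- u) (- u)"
    by (simp add: inner_diff_left inner_add_left inner_commute algebra_simps)
  also have "\<dots> = - 1 - (cmod w)^2 / (cmod u)^2" by (rule si_core[OF h1' h2' u0])
  finally show ?thesis by (simp add: scaleR_conv_of_real algebra_simps)
qed

lemma M_formula:
  fixes M A B C :: complex
  assumes hm: "is_M_point M A B C" and nd: "nondeg_triangle A B C"
  shows "M = (B + C) / 2 + of_real ((cmod (B - (B + C) / 2))^2 / (cmod (A - (B + C) / 2))^2) * (A - (B + C) / 2)"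
proof -
  define E where "E = (B + C) / 2"
  define u where "u = A - E"
  define w where "w = B - E"
  define \<rho> where "\<rho> = (cmod w)^2 / (cmod u)^2"
  have AE: "A = E + u" and BE: "B = E + w" and CE: "C = E - w" unfolding u_def w_def E_def by (simp_all add: field_simps)
  have u0: "u \<noteq> 0"
  proof
    assume "u = 0"
    then have "A = E" unfolding u_def by simp
    then have ca: "C - A = - (B - A)" unfolding E_def by (simp add: field_simps)
    have "cr (B - A) (C - A) = 0" unfolding ca by (simp add: cr_def algebra_simps)
    then show False using nd unfolding nondeg_cr by simp
  qed
  have "M = E + of_real \<rho> * u"
    using hm unfolding is_M_point_def Let_def E_def[symmetric]
  proof (elim disjE conjE exE)
    fix Oc F
    assume cc: "is_circumcenter Oc A B C" and F: "F = second_inter A (E - A) Oc"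
      and seg: "M \<in> closed_segment A E" and dd: "dist E M = dist E F"
    define q where "q = Oc - E"
    have i: "q - u = Oc - A" "q - w = Oc - B" "q + w = Oc - C"
      unfolding q_def u_def w_def E_def by (simp_all add: field_simps)
    have h1: "cmod (q - u) = cmod (q - w)" and h2: "cmod (q - w) = cmod (q + w)"
      using cc unfolding is_circumcenter_def i dist_norm by simp_all
    have "F = second_inter (E + u) (- u) (E + q)" unfolding F AE q_def by simp
    also have "\<dots> = E - of_real \<rho> * u" unfolding \<rho>_def by (rule si_acute[OF h1 h2 u0])
    finally have Fe: "F = E - of_real \<rho> * u" .
    obtain t where t: "0 \<le> t" "t \<le> 1" "M = (1 - t) *\<^sub>R A + t *\<^sub>R E"
      using seg unfolding closed_segment_def by auto
    have Me: "M = E + of_real (1 - t) * u" unfolding t(3) AE by (simp add: scaleR_conv_of_real algebra_simps)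
    have rp: "\<rho> \<ge> 0" unfolding \<rho>_def by simp
    have n1: "cmod (of_real (1 - t) * u) = (1 - t) * cmod u"
      by (simp only: norm_mult norm_of_real) (simp add: t)
    have n2: "cmod (of_real \<rho> * u) = \<rho> * cmod u"
      by (simp only: norm_mult norm_of_real) (simp add: rp)
    have "dist E M = cmod (of_real (1 - t) * u)" unfolding Me dist_norm by (simp add: norm_minus_commute)
    moreover have "dist E F = cmod (of_real \<rho> * u)" unfolding Fe dist_norm by simp
    ultimately have "(1 - t) * cmod u = \<rho> * cmod u" using dd n1 n2 by linarith
    then have "1 - t = \<rho>" using u0 by auto
    then show ?thesis unfolding Me by simp
  next
    fix F Oc'
    assume F: "F = B + C - A" and cc: "is_circumcenter Oc' F B C" and M: "M = second_inter F (E - F) Oc'"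
    define q where "q = Oc' - E"
    have FE: "F = E - u" unfolding F AE BE CE by simp
    have i: "q + u = Oc' - F" "q - w = Oc' - B" "q + w = Oc' - C"
      unfolding q_def FE u_def w_def E_def by (simp_all add: field_simps)
    have h1: "cmod (q + u) = cmod (q - w)" and h2: "cmod (q - w) = cmod (q + w)"
      using cc unfolding is_circumcenter_def i dist_norm by simp_all
    have "M = second_inter (E - u) u (E + q)" unfolding M FE q_def by simp
    also have "\<dots> = E + of_real \<rho> * u" unfolding \<rho>_def by (rule si_obtuse[OF h1 h2 u0])
    finally show ?thesis .
  qed
  then show ?thesis unfolding \<rho>_def u_def w_def E_def .
qed


lemma humpty_rel:
  fixes u w :: complex and \<rho> :: real
  assumes hr: "\<rho> * (cmod u)^2 = (cmod w)^2"
  defines "a \<equiv> of_real (1 - \<rho>) * u" and "b \<equiv> w - of_real \<rho> * u" and "c \<equiv> - w - of_real \<rho> * u"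
  shows "(cr b c)^2 * (cmod a)^2 * (cmod (a - b))^2 = (cr c a)^2 * (cmod b)^2 * (cmod (b - c))^2"
    and "(cr b c)^2 * (cmod a)^2 * (cmod (c - a))^2 = (cr a b)^2 * (cmod c)^2 * (cmod (b - c))^2"
proof -
  obtain u1 u2 where u: "u = Complex u1 u2" by (metis complex.exhaust)
  obtain w1 w2 where w: "w = Complex w1 w2" by (metis complex.exhaust)
  have h: "\<rho> * (u1^2 + u2^2) = w1^2 + w2^2" using hr unfolding u w sq_norm by simp
  define X where "X = u1 * w2 - u2 * w1"
  define U where "U = u1^2 + u2^2"
  define Dm where "Dm = (u1 - w1)^2 + (u2 - w2)^2"
  define Dp where "Dp = (u1 + w1)^2 + (u2 + w2)^2"
  have i1: "cr b c = 2 * \<rho> * X" unfolding b_def c_def u w X_def by (simp add: cr_def algebra_simps)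
  have i2: "cr c a = (1 - \<rho>) * X" unfolding a_def c_def u w X_def by (simp add: cr_def algebra_simps)
  have i3: "cr a b = (1 - \<rho>) * X" unfolding a_def b_def u w X_def by (simp add: cr_def algebra_simps)
  have n1: "(cmod a)^2 = (1 - \<rho>)^2 * U" unfolding a_def u U_def sq_norm by (simp add: algebra_simps power2_eq_square)
  have n2: "(cmod (a - b))^2 = Dm" unfolding a_def b_def u w Dm_def sq_norm by (simp add: algebra_simps power2_eq_square)
  have n3: "(cmod (c - a))^2 = Dp" unfolding a_def c_def u w Dp_def sq_norm by (simp add: algebra_simps power2_eq_square)
  have n4: "(cmod b)^2 = \<rho> * Dm"
  proof -
    have "(cmod b)^2 = (w1 - \<rho> * u1)^2 + (w2 - \<rho> * u2)^2" unfolding b_def u w sq_norm by simp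
    also have "\<dots> = \<rho> * Dm" unfolding Dm_def using h by algebra
    finally show ?thesis .
  qed
  have n5: "(cmod c)^2 = \<rho> * Dp"
  proof -
    have "(cmod c)^2 = (- w1 - \<rho> * u1)^2 + (- w2 - \<rho> * u2)^2" unfolding c_def u w sq_norm by simp
    also have "\<dots> = \<rho> * Dp" unfolding Dp_def using h by algebra
    finally show ?thesis .
  qed
  have n6: "(cmod (b - c))^2 = 4 * \<rho> * U"
  proof -
    have "(cmod (b - c))^2 = (2 * w1)^2 + (2 * w2)^2" unfolding b_def c_def u w sq_norm by simp
    also have "\<dots> = 4 * \<rho> * U" unfolding U_def using h by algebra
    finally show ?thesis .
  qed
  show "(cr b c)^2 * (cmod a)^2 * (cmod (a - b))^2 = (cr c a)^2 * (cmod b)^2 * (cmod (b - c))^2"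
    unfolding i1 i2 n1 n2 n4 n6 by (simp add: algebra_simps power2_eq_square)
  show "(cr b c)^2 * (cmod a)^2 * (cmod (c - a))^2 = (cr a b)^2 * (cmod c)^2 * (cmod (b - c))^2"
    unfolding i1 i3 n1 n3 n5 n6 by (simp add: algebra_simps power2_eq_square)
qed

lemma M_rel:
  fixes M A B C :: complex
  assumes hm: "is_M_point M A B C" and nd: "nondeg_triangle A B C"
  defines "a \<equiv> A - M" and "b \<equiv> B - M" and "c \<equiv> C - M"
  shows "(cr b c)^2 * (cmod a)^2 * (cmod (a - b))^2 = (cr c a)^2 * (cmod b)^2 * (cmod (b - c))^2"
    and "(cr b c)^2 * (cmod a)^2 * (cmod (c - a))^2 = (cr a b)^2 * (cmod c)^2 * (cmod (b - c))^2"
proof -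
  define E where "E = (B + C) / 2"
  define u where "u = A - E"
  define w where "w = B - E"
  define \<rho> where "\<rho> = (cmod w)^2 / (cmod u)^2"
  have u0: "u \<noteq> 0"
  proof
    assume "u = 0"
    then have "A = E" unfolding u_def by simp
    then have ca: "C - A = - (B - A)" unfolding E_def by (simp add: field_simps)
    have "cr (B - A) (C - A) = 0" unfolding ca by (simp add: cr_def algebra_simps)
    then show False using nd unfolding nondeg_cr by simp
  qed
  have hr: "\<rho> * (cmod u)^2 = (cmod w)^2" unfolding \<rho>_def using u0 by simp
  have Mf: "M = E + of_real \<rho> * u" using M_formula[OF hm nd] unfolding \<rho>_def u_def w_def E_def .
  have ab: "a = of_real (1 - \<rho>) * u" "b = w - of_real \<rho> * u" "c = - w - of_real \<rho> * u"
    unfolding a_def b_def c_def Mf u_def w_def E_def by (simp_all add: algebra_simps field_simps)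
  show "(cr b c)^2 * (cmod a)^2 * (cmod (a - b))^2 = (cr c a)^2 * (cmod b)^2 * (cmod (b - c))^2"
    unfolding ab by (rule humpty_rel(1)[OF hr])
  show "(cr b c)^2 * (cmod a)^2 * (cmod (c - a))^2 = (cr a b)^2 * (cmod c)^2 * (cmod (b - c))^2"
    unfolding ab by (rule humpty_rel(2)[OF hr])
qed


lemma reflect_cx: "w \<noteq> 0 \<Longrightarrow> reflect_dir w x = cnj x * w^2 / (w * cnj w)"
proof -
  assume w0: "w \<noteq> 0"
  have i1: "(of_real (inner x w) :: complex) = (w * cnj x + cnj w * x) / 2"
    by (simp add: inner_complex_def complex_eq_iff algebra_simps)
  have i2: "(of_real (inner w w) :: complex) = w * cnj w"
    by (simp add: inner_complex_def complex_eq_iff algebra_simps power2_eq_square)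
  have "reflect_dir w x = of_real (2 * inner x w / inner w w) * w - x"
    unfolding reflect_dir_def by (simp add: scaleR_conv_of_real)
  also have "\<dots> = 2 * of_real (inner x w) / of_real (inner w w) * w - x" by simp
  also have "\<dots> = cnj x * w^2 / (w * cnj w)" unfolding i1 i2 using w0
    by (simp add: field_simps power2_eq_square)
  finally show ?thesis .
qed

lemma unit_sum_sq:
  assumes "u1 * cnj u1 = 1" "u2 * cnj u2 = 1"
  shows "(u1 + u2)^2 = u1 * u2 * ((u1 + u2) * cnj (u1 + u2))"
  using assms by (simp add: algebra_simps power2_eq_square)

lemma symmedian_formula:
  fixes A B C :: complex
  assumes nd: "nondeg_triangle A B C"
  defines "p \<equiv> B - A" and "q \<equiv> C - A"
  shows "symmedian_dir A B C = of_real (1 / (2 * cmod p * cmod q)) * (of_real ((cmod p)^2) * q + of_real ((cmod q)^2) * p)"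
proof -
  have cpq: "cr p q \<noteq> 0" using nd unfolding nondeg_cr p_def q_def .
  then have p0: "p \<noteq> 0" and q0: "q \<noteq> 0" by auto
  define \<alpha> where "\<alpha> = cmod p"
  define \<beta> where "\<beta> = cmod q"
  have ap: "\<alpha> > 0" "\<beta> > 0" using p0 q0 unfolding \<alpha>_def \<beta>_def by auto
  define u1 where "u1 = p / of_real \<alpha>"
  define u2 where "u2 = q / of_real \<beta>"
  have pa: "p * cnj p = of_real (\<alpha>^2)" "q * cnj q = of_real (\<beta>^2)" unfolding \<alpha>_def \<beta>_def
    by (simp_all only: complex_norm_square)
  have uu: "u1 * cnj u1 = 1" "u2 * cnj u2 = 1" unfolding u1_def u2_def using pa ap
    by (simp_all add: field_simps power2_eq_square)
  define w where "w = u1 + u2"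
  have wdef: "(B - A) /\<^sub>R norm (B - A) + (C - A) /\<^sub>R norm (C - A) = w"
    unfolding w_def u1_def u2_def \<alpha>_def \<beta>_def p_def q_def by (simp add: scaleR_conv_of_real divide_inverse_commute)
  have w0: "w \<noteq> 0"
  proof
    assume "w = 0"
    then have "p = - of_real (\<alpha> / \<beta>) * q" unfolding w_def u1_def u2_def using ap
      by (simp add: field_simps add_eq_0_iff)
    then have "cr p q = 0" by (simp add: cr_def algebra_simps)
    then show False using cpq by simp
  qed
  have x: "(B + C) / 2 - A = (p + q) / 2" unfolding p_def q_def by (simp add: field_simps)
  have "symmedian_dir A B C = cnj ((p + q) / 2) * (w^2 / (w * cnj w))"
    unfolding symmedian_dir_def wdef x using reflect_cx[OF w0] by simp
  also have "w^2 / (w * cnj w) = u1 * u2"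
  proof -
    have ww: "w^2 = u1 * u2 * (w * cnj w)" using unit_sum_sq[OF uu] unfolding w_def .
    have "w * cnj w \<noteq> 0" using w0 by simp
    then show ?thesis unfolding ww by simp
  qed
  also have "cnj ((p + q) / 2) * (u1 * u2) = of_real (1 / (2 * \<alpha> * \<beta>)) * (of_real (\<alpha>^2) * q + of_real (\<beta>^2) * p)"
    unfolding u1_def u2_def using ap pa by (simp add: field_simps)
  finally show ?thesis unfolding \<alpha>_def \<beta>_def .
qed


lemma SK1:
  fixes p1 p2 q1 q2 o1 o2 k1 k2 :: real
  assumes H1: "o1^2 + o2^2 = (o1 - p1)^2 + (o2 - p2)^2"
    and H2: "(o1 - p1)^2 + (o2 - p2)^2 = (o1 - q1)^2 + (o2 - q2)^2"
    and C1: "(k1 - p1)^2 + (k2 - p2)^2 = (k1 - q1)^2 + (k2 - q2)^2"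
    and C2: "(k1 - p1)^2 + (k2 - p2)^2 = (k1 - o1)^2 + (k2 - o2)^2"
  shows "((p1 - q1)^2 + (p2 - q2)^2) * (2 * (p1 * q1 + p2 * q2) * (k1^2 + k2^2 - ((k1 - p1)^2 + (k2 - p2)^2))
          - (p1^2 + p2^2) * (q1^2 + q2^2)) = 0"
  using assms by algebra

lemma SK2:
  fixes p1 p2 q1 q2 o1 o2 :: real
  assumes H1: "o1^2 + o2^2 = (o1 - p1)^2 + (o2 - p2)^2"
    and H2: "(o1 - p1)^2 + (o2 - p2)^2 = (o1 - q1)^2 + (o2 - q2)^2"
  shows "2 * (p1 * q2 - p2 * q1) * ((q1 - p1) * (o2 - p2) - (q2 - p2) * (o1 - p1))
      = (p1 * q1 + p2 * q2) * ((p1 - q1)^2 + (p2 - q2)^2)"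
  using assms by algebra

lemma SK3:
  fixes p1 p2 q1 q2 k1 k2 t :: real
  assumes C1: "(k1 - p1)^2 + (k2 - p2)^2 = (k1 - q1)^2 + (k2 - q2)^2"
    and C3: "(k1 - p1)^2 + (k2 - p2)^2 = (k1 - t * ((p1^2 + p2^2) * q1 + (q1^2 + q2^2) * p1))^2
                + (k2 - t * ((p1^2 + p2^2) * q2 + (q1^2 + q2^2) * p2))^2"
    and K: "2 * (p1 * q1 + p2 * q2) * (k1^2 + k2^2 - ((k1 - p1)^2 + (k2 - p2)^2)) = (p1^2 + p2^2) * (q1^2 + q2^2)"
  shows "(p1^2 + p2^2) * (q1^2 + q2^2) * (t * ((p1 + q1)^2 + (p2 + q2)^2) - 1) * (2 * (p1 * q1 + p2 * q2) * t - 1) = 0"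
  using assms by algebra

lemma SK4:
  fixes p1 p2 q1 q2 t :: real
  assumes "2 * (p1 * q1 + p2 * q2) * t = 1"
  shows "2 * (p1 * q1 + p2 * q2) * ((q1 - p1) * (t * ((p1^2 + p2^2) * q2 + (q1^2 + q2^2) * p2) - p2)
            - (q2 - p2) * (t * ((p1^2 + p2^2) * q1 + (q1^2 + q2^2) * p1) - p1))
       = - (p1 * q2 - p2 * q1) * ((p1 - q1)^2 + (p2 - q2)^2)"
  using assms by algebra

lemma cmod_eq_sq: "cmod x = cmod y \<Longrightarrow> Re x ^ 2 + Im x ^ 2 = Re y ^ 2 + Im y ^ 2"
  by (metis sq_norm)

lemma S_rel:
  fixes S A B C :: complex
  assumes hs: "is_S_point S A B C" and nd: "nondeg_triangle A B C"
  shows "(A - S)^2 = (B - S) * (C - S)"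
proof -
  define p where "p = B - A"
  define q where "q = C - A"
  have cpq: "cr p q \<noteq> 0" using nd unfolding nondeg_cr p_def q_def .
  obtain Oc t c1 where cc: "is_circumcenter Oc A B C" and t: "t > 0"
    and S: "S = A + t *\<^sub>R symmedian_dir A B C"
    and c1: "dist c1 B = dist c1 C" "dist c1 B = dist c1 Oc" "dist c1 B = dist c1 S"
    and orc: "S = B \<or> S = C \<or> orient B C S * orient B C Oc > 0"
    using hs unfolding is_S_point_def on_circle3_def by blast
  define \<alpha> where "\<alpha> = cmod p"
  define \<beta> where "\<beta> = cmod q"
  have p0: "p \<noteq> 0" and q0: "q \<noteq> 0" using cpq by auto
  have ap: "\<alpha> > 0" "\<beta> > 0" unfolding \<alpha>_def \<beta>_def using p0 q0 by auto
  define \<tau> where "\<tau> = t / (2 * \<alpha> * \<beta>)"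
  have tp: "\<tau> > 0" unfolding \<tau>_def using t ap by simp
  define s where "s = S - A"
  define g where "g = of_real (\<alpha>^2) * q + of_real (\<beta>^2) * p"
  have sg: "s = of_real \<tau> * g"
    unfolding s_def S g_def symmedian_formula[OF nd] \<tau>_def \<alpha>_def \<beta>_def p_def q_def
    by (simp add: scaleR_conv_of_real)
  define ocr where "ocr = Oc - A"
  define k where "k = c1 - A"
  define p1 p2 q1 q2 o1 o2 k1 k2 where "p1 = Re p" "p2 = Im p" "q1 = Re q" "q2 = Im q"
    "o1 = Re ocr" "o2 = Im ocr" "k1 = Re k" "k2 = Im k"
  have a2: "\<alpha>^2 = p1^2 + p2^2" "\<beta>^2 = q1^2 + q2^2"
    unfolding \<alpha>_def \<beta>_def p1_p2_q1_q2_o1_o2_k1_k2_def by (simp_all add: sq_norm)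
  have s1: "Re s = \<tau> * ((p1^2 + p2^2) * q1 + (q1^2 + q2^2) * p1)"
    and s2: "Im s = \<tau> * ((p1^2 + p2^2) * q2 + (q1^2 + q2^2) * p2)"
    using a2 unfolding sg g_def p1_p2_q1_q2_o1_o2_k1_k2_def by (simp_all add: algebra_simps)
  have H1: "o1^2 + o2^2 = (o1 - p1)^2 + (o2 - p2)^2"
  proof -
    have "cmod ocr = cmod (ocr - p)" using cc unfolding is_circumcenter_def dist_norm ocr_def p_def by simp
    then show ?thesis using cmod_eq_sq unfolding p1_p2_q1_q2_o1_o2_k1_k2_def by fastforce
  qed
  have H2: "(o1 - p1)^2 + (o2 - p2)^2 = (o1 - q1)^2 + (o2 - q2)^2"
  proof -
    have "cmod (ocr - p) = cmod (ocr - q)" using cc unfolding is_circumcenter_def dist_norm ocr_def p_def q_def by simp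
    then show ?thesis using cmod_eq_sq unfolding p1_p2_q1_q2_o1_o2_k1_k2_def by fastforce
  qed
  have C1: "(k1 - p1)^2 + (k2 - p2)^2 = (k1 - q1)^2 + (k2 - q2)^2"
  proof -
    have "cmod (k - p) = cmod (k - q)" using c1 unfolding dist_norm k_def p_def q_def by simp
    then show ?thesis using cmod_eq_sq unfolding p1_p2_q1_q2_o1_o2_k1_k2_def by fastforce
  qed
  have C2: "(k1 - p1)^2 + (k2 - p2)^2 = (k1 - o1)^2 + (k2 - o2)^2"
  proof -
    have "cmod (k - p) = cmod (k - ocr)" using c1 unfolding dist_norm k_def p_def ocr_def by simp
    then show ?thesis using cmod_eq_sq unfolding p1_p2_q1_q2_o1_o2_k1_k2_def by fastforce
  qed
  have C3: "(k1 - p1)^2 + (k2 - p2)^2 = (k1 - \<tau> * ((p1^2 + p2^2) * q1 + (q1^2 + q2^2) * p1))^2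
                + (k2 - \<tau> * ((p1^2 + p2^2) * q2 + (q1^2 + q2^2) * p2))^2"
  proof -
    have "cmod (k - p) = cmod (k - s)" using c1 unfolding dist_norm k_def p_def s_def by simp
    then have "Re (k - p) ^ 2 + Im (k - p) ^ 2 = Re (k - s) ^ 2 + Im (k - s) ^ 2" by (rule cmod_eq_sq)
    then have "(k1 - p1)^2 + (k2 - p2)^2 = (k1 - Re s)^2 + (k2 - Im s)^2"
      unfolding p1_p2_q1_q2_o1_o2_k1_k2_def by simp
    then show ?thesis unfolding s1 s2 .
  qed
  have cr12: "p1 * q2 - p2 * q1 \<noteq> 0" using cpq unfolding cr_def p1_p2_q1_q2_o1_o2_k1_k2_def by simp
  have pq0: "(p1 - q1)^2 + (p2 - q2)^2 \<noteq> 0"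
  proof
    assume "(p1 - q1)^2 + (p2 - q2)^2 = 0"
    then have "p1 = q1" "p2 = q2" by (simp_all add: sum_power2_eq_zero_iff)
    then show False using cr12 by (simp add: algebra_simps)
  qed
  have K: "2 * (p1 * q1 + p2 * q2) * (k1^2 + k2^2 - ((k1 - p1)^2 + (k2 - p2)^2)) = (p1^2 + p2^2) * (q1^2 + q2^2)"
  proof -
    have "2 * (p1 * q1 + p2 * q2) * (k1^2 + k2^2 - ((k1 - p1)^2 + (k2 - p2)^2)) - (p1^2 + p2^2) * (q1^2 + q2^2) = 0"
      using SK1[OF H1 H2 C1 C2] pq0 by (metis mult_eq_0_iff)
    then show ?thesis by linarith
  qed
  have ab0: "(p1^2 + p2^2) * (q1^2 + q2^2) \<noteq> 0" unfolding a2[symmetric] using ap by simp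
  have cases: "\<tau> * ((p1 + q1)^2 + (p2 + q2)^2) = 1 \<or> 2 * (p1 * q1 + p2 * q2) * \<tau> = 1"
  proof -
    have "(p1^2 + p2^2) * (q1^2 + q2^2) * (\<tau> * ((p1 + q1)^2 + (p2 + q2)^2) - 1) * (2 * (p1 * q1 + p2 * q2) * \<tau> - 1) = 0"
      by (rule SK3[OF C1 C3 K])
    then have "(\<tau> * ((p1 + q1)^2 + (p2 + q2)^2) - 1) = 0 \<or> (2 * (p1 * q1 + p2 * q2) * \<tau> - 1) = 0"
      using ab0 by (metis mult_eq_0_iff)
    then show ?thesis by linarith
  qed
  then show ?thesis
  proof
    assume h: "\<tau> * ((p1 + q1)^2 + (p2 + q2)^2) = 1"
    have n: "(p + q) * cnj (p + q) = of_real ((p1 + q1)^2 + (p2 + q2)^2)"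
      unfolding p1_p2_q1_q2_o1_o2_k1_k2_def by (simp add: complex_eq_iff power2_eq_square algebra_simps)
    have pa: "p * cnj p = of_real (\<alpha>^2)" "q * cnj q = of_real (\<beta>^2)" unfolding \<alpha>_def \<beta>_def
      by (simp_all only: complex_norm_square)
    have "g * (p + q) = p * q * ((p + q) * cnj (p + q))"
      unfolding g_def pa[symmetric] by (simp add: algebra_simps)
    then have G: "g * (p + q) = p * q * of_real ((p1 + q1)^2 + (p2 + q2)^2)" unfolding n .
    have "s * (p + q) = of_real \<tau> * (g * (p + q))" unfolding sg by (simp add: mult.assoc)
    also have "\<dots> = p * q * of_real (\<tau> * ((p1 + q1)^2 + (p2 + q2)^2))" unfolding G of_real_mult by (simp add: mult_ac)
    also have "\<dots> = p * q" unfolding h by simp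
    finally have sp: "s * (p + q) = p * q" .
    have e: "A - S = - s" "B - S = p - s" "C - S = q - s" unfolding s_def p_def q_def by simp_all
    have "(- s)^2 = (p - s) * (q - s)" using sp by (simp add: algebra_simps power2_eq_square)
    then show ?thesis unfolding e .
  next
    assume h: "2 * (p1 * q1 + p2 * q2) * \<tau> = 1"
    have pq: "p1 * q1 + p2 * q2 \<noteq> 0"
    proof
      assume "p1 * q1 + p2 * q2 = 0"
      then have "2 * (p1 * q1 + p2 * q2) * \<tau> = 0" by simp
      then show False using h by linarith
    qed
    have crps: "cr p s = \<tau> * (p1^2 + p2^2) * (p1 * q2 - p2 * q1)"
      unfolding cr_def using s1 s2 unfolding p1_p2_q1_q2_o1_o2_k1_k2_def by (simp add: algebra_simps power2_eq_square)
    have crqs: "cr q s = - \<tau> * (q1^2 + q2^2) * (p1 * q2 - p2 * q1)"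
      unfolding cr_def using s1 s2 unfolding p1_p2_q1_q2_o1_o2_k1_k2_def by (simp add: algebra_simps power2_eq_square)
    have nB: "S \<noteq> B"
    proof
      assume "S = B"
      then have "s = p" unfolding s_def p_def by simp
      then have "cr p s = 0" by simp
      then show False using crps tp ab0 cr12 by simp
    qed
    have nC: "S \<noteq> C"
    proof
      assume "S = C"
      then have "s = q" unfolding s_def q_def by simp
      then have "cr q s = 0" by simp
      then show False using crqs tp ab0 cr12 by simp
    qed
    define X where "X = orient B C S"
    define Y where "Y = orient B C Oc"
    have X: "X = (q1 - p1) * (Im s - p2) - (q2 - p2) * (Re s - p1)"
      unfolding X_def orient_def p1_p2_q1_q2_o1_o2_k1_k2_def s_def p_def q_def by (simp add: algebra_simps)
    have Y: "Y = (q1 - p1) * (o2 - p2) - (q2 - p2) * (o1 - p1)"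
      unfolding Y_def orient_def p1_p2_q1_q2_o1_o2_k1_k2_def ocr_def p_def q_def by (simp add: algebra_simps)
    have x2: "2 * (p1 * q1 + p2 * q2) * X = - (p1 * q2 - p2 * q1) * ((p1 - q1)^2 + (p2 - q2)^2)"
      unfolding X s1 s2 by (rule SK4[OF h])
    have y2: "2 * (p1 * q2 - p2 * q1) * Y = (p1 * q1 + p2 * q2) * ((p1 - q1)^2 + (p2 - q2)^2)"
      unfolding Y by (rule SK2[OF H1 H2])
    define D where "D = (p1 - q1)^2 + (p2 - q2)^2"
    define m where "m = p1 * q1 + p2 * q2"
    define cc' where "cc' = p1 * q2 - p2 * q1"
    have "(2 * m * X) * (2 * cc' * Y) = - cc' * D * (m * D)" using x2 y2 unfolding D_def m_def cc'_def by simp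
    then have "(4 * m * cc') * (X * Y) = (4 * m * cc') * (- D * D / 4)" by (simp add: algebra_simps)
    moreover have "4 * m * cc' \<noteq> 0" using pq cr12 unfolding m_def cc'_def by simp
    ultimately have "X * Y = - D * D / 4" by (metis mult_left_cancel)
    moreover have "D * D \<ge> 0" by simp
    ultimately have "X * Y \<le> 0" by simp
    then show ?thesis using orc nB nC unfolding X_def Y_def by simp
  qed
qed


lemma tri_sim_rot2: "tri_sim C A B C' A' B' \<Longrightarrow> tri_sim A B C A' B' C'"
  by (rule tri_sim_rot, rule tri_sim_rot)

theorem theorem15:
  fixes A B C :: "nat \<Rightarrow> complex" and P :: complex
  assumes nondeg: "\<And>k. nondeg_triangle (A k) (B k) (C k)"
    and P_off: "\<And>k. \<not> on_line P (B k) (C k) \<and> \<not> on_line P (C k) (A k) \<and> \<not> on_line P (A k) (B k)"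
    and chain: "\<And>k. miquel_triangle P (A k) (B k) (C k) (A (Suc k)) (B (Suc k)) (C (Suc k))"
  shows
    "(first_brocard P (A 0) (B 0) (C 0) \<longrightarrow>
        (\<forall>k. first_brocard P (A k) (B k) (C k)) \<and>
        (\<forall>k\<ge>1. tri_sim (A 0) (B 0) (C 0) (A k) (B k) (C k)))
   \<and> (second_brocard P (A 0) (B 0) (C 0) \<longrightarrow>
        (\<forall>k. second_brocard P (A k) (B k) (C k)) \<and>
        (\<forall>k\<ge>1. tri_sim (A 0) (B 0) (C 0) (A k) (B k) (C k)))
   \<and> ((is_circumcenter P (A 0) (B 0) (C 0) \<or> is_S_point P (A 0) (B 0) (C 0) \<or>
         is_S_point P (B 0) (C 0) (A 0) \<or> is_S_point P (C 0) (A 0) (B 0)) \<longrightarrow>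
        (\<forall>k. k mod 3 = 0 \<or> k mod 3 = 1 \<longrightarrow> tri_sim (A 0) (B 0) (C 0) (A k) (B k) (C k)))
   \<and> ((is_orthocenter P (A 0) (B 0) (C 0) \<or> is_M_point P (A 0) (B 0) (C 0) \<or>
         is_M_point P (B 0) (C 0) (A 0) \<or> is_M_point P (C 0) (A 0) (B 0)) \<longrightarrow>
        (\<forall>k. k mod 3 = 2 \<or> k mod 3 = 0 \<longrightarrow> tri_sim (A 0) (B 0) (C 0) (A k) (B k) (C k)))"
proof -
  interpret m0: mchain A B C P using nondeg P_off chain by unfold_locales
  have nd1: "nondeg_triangle (B k) (C k) (A k)" and nd2: "nondeg_triangle (C k) (A k) (B k)" for k
    using nondeg[of k] unfolding nondeg_triangle_def by (simp_all add: insert_commute)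
  interpret m1: mchain B C A P
  proof
    show "\<And>k. nondeg_triangle (B k) (C k) (A k)" by (rule nd1)
    show "\<And>k. \<not> on_line P (C k) (A k) \<and> \<not> on_line P (A k) (B k) \<and> \<not> on_line P (B k) (C k)" using P_off by blast
    show "\<And>k. miquel_triangle P (B k) (C k) (A k) (B (Suc k)) (C (Suc k)) (A (Suc k))"
      using chain unfolding miquel_triangle_def by blast
  qed
  interpret m2: mchain C A B P
  proof
    show "\<And>k. nondeg_triangle (C k) (A k) (B k)" by (rule nd2)
    show "\<And>k. \<not> on_line P (A k) (B k) \<and> \<not> on_line P (B k) (C k) \<and> \<not> on_line P (C k) (A k)" using P_off by blast
    show "\<And>k. miquel_triangle P (C k) (A k) (B k) (C (Suc k)) (A (Suc k)) (B (Suc k))"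
      using chain unfolding miquel_triangle_def by blast
  qed
  have split0: "k mod 3 = 0 \<Longrightarrow> k = 3 * (k div 3) + 0" for k :: nat by (metis div_mult_mod_eq mult.commute)
  have split1: "k mod 3 = 1 \<Longrightarrow> k = 3 * (k div 3) + 1" for k :: nat by (metis div_mult_mod_eq mult.commute)
  have split2: "k mod 3 = 2 \<Longrightarrow> k = 3 * (k div 3) + 2" for k :: nat by (metis div_mult_mod_eq mult.commute)
  have sim0: "k mod 3 = 0 \<Longrightarrow> tri_sim (A 0) (B 0) (C 0) (A k) (B k) (C k)" for k
    using m0.period_sim[OF tri_sim_refl, of "k div 3"] split0[of k] by simp
  have pa: "first_brocard P (A 0) (B 0) (C 0) \<longrightarrow>
        (\<forall>k. first_brocard P (A k) (B k) (C k)) \<and>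
        (\<forall>k\<ge>1. tri_sim (A 0) (B 0) (C 0) (A k) (B k) (C k))"
    using m0.fb_all m0.rotinv_sim by blast
  have pb: "second_brocard P (A 0) (B 0) (C 0) \<longrightarrow>
        (\<forall>k. second_brocard P (A k) (B k) (C k)) \<and>
        (\<forall>k\<ge>1. tri_sim (A 0) (B 0) (C 0) (A k) (B k) (C k))"
    using m0.sb_all m0.rotinv_sim by blast
  have pc: "(is_circumcenter P (A 0) (B 0) (C 0) \<or> is_S_point P (A 0) (B 0) (C 0) \<or>
         is_S_point P (B 0) (C 0) (A 0) \<or> is_S_point P (C 0) (A 0) (B 0)) \<longrightarrow>
        (\<forall>k. k mod 3 = 0 \<or> k mod 3 = 1 \<longrightarrow> tri_sim (A 0) (B 0) (C 0) (A k) (B k) (C k))"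
  proof (intro impI allI)
    fix k :: nat
    assume h: "is_circumcenter P (A 0) (B 0) (C 0) \<or> is_S_point P (A 0) (B 0) (C 0) \<or>
         is_S_point P (B 0) (C 0) (A 0) \<or> is_S_point P (C 0) (A 0) (B 0)"
      and km: "k mod 3 = 0 \<or> k mod 3 = 1"
    have T1: "tri_sim (A 0) (B 0) (C 0) (A 1) (B 1) (C 1)"
      using h
    proof (elim disjE)
      assume "is_circumcenter P (A 0) (B 0) (C 0)" then show ?thesis by (rule m0.O_case)
    next
      assume "is_S_point P (A 0) (B 0) (C 0)"
      then have "(A 0 - P)^2 = (B 0 - P) * (C 0 - P)" using S_rel nondeg by blast
      then show ?thesis by (intro m0.S_alg_case) (simp add: m0.a_def m0.b_def m0.c_def)
    next
      assume "is_S_point P (B 0) (C 0) (A 0)"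
      then have "(B 0 - P)^2 = (C 0 - P) * (A 0 - P)" using S_rel nd1 by blast
      then have "tri_sim (B 0) (C 0) (A 0) (B 1) (C 1) (A 1)"
        by (intro m1.S_alg_case) (simp add: m1.a_def m1.b_def m1.c_def)
      then show ?thesis by (rule tri_sim_rot)
    next
      assume "is_S_point P (C 0) (A 0) (B 0)"
      then have "(C 0 - P)^2 = (A 0 - P) * (B 0 - P)" using S_rel nd2 by blast
      then have "tri_sim (C 0) (A 0) (B 0) (C 1) (A 1) (B 1)"
        by (intro m2.S_alg_case) (simp add: m2.a_def m2.b_def m2.c_def)
      then show ?thesis by (rule tri_sim_rot2)
    qed
    from km show "tri_sim (A 0) (B 0) (C 0) (A k) (B k) (C k)"
    proof
      assume "k mod 3 = 0" then show ?thesis by (rule sim0)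
    next
      assume "k mod 3 = 1"
      then show ?thesis using m0.period_sim[OF T1, of "k div 3"] split1[of k] by simp
    qed
  qed
  have pd': "(is_orthocenter P (A 0) (B 0) (C 0) \<or> is_M_point P (A 0) (B 0) (C 0) \<or>
         is_M_point P (B 0) (C 0) (A 0) \<or> is_M_point P (C 0) (A 0) (B 0)) \<longrightarrow>
        (\<forall>k. k mod 3 = 2 \<or> k mod 3 = 0 \<longrightarrow> tri_sim (A 0) (B 0) (C 0) (A k) (B k) (C k))"
  proof (intro impI allI)
    fix k :: nat
    assume h: "is_orthocenter P (A 0) (B 0) (C 0) \<or> is_M_point P (A 0) (B 0) (C 0) \<or>
         is_M_point P (B 0) (C 0) (A 0) \<or> is_M_point P (C 0) (A 0) (B 0)"
      and km: "k mod 3 = 2 \<or> k mod 3 = 0"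
    have T2: "tri_sim (A 0) (B 0) (C 0) (A 2) (B 2) (C 2)"
      using h
    proof (elim disjE)
      assume "is_orthocenter P (A 0) (B 0) (C 0)" then show ?thesis by (rule m0.H_case)
    next
      assume hm: "is_M_point P (A 0) (B 0) (C 0)"
      show ?thesis
        by (rule m0.M_alg_case) (use M_rel[OF hm nondeg] in \<open>simp_all add: m0.a_def m0.b_def m0.c_def\<close>)
    next
      assume hm: "is_M_point P (B 0) (C 0) (A 0)"
      have "tri_sim (B 0) (C 0) (A 0) (B 2) (C 2) (A 2)"
        by (rule m1.M_alg_case) (use M_rel[OF hm nd1] in \<open>simp_all add: m1.a_def m1.b_def m1.c_def\<close>)
      then show ?thesis by (rule tri_sim_rot)
    next
      assume hm: "is_M_point P (C 0) (A 0) (B 0)"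
      have "tri_sim (C 0) (A 0) (B 0) (C 2) (A 2) (B 2)"
        by (rule m2.M_alg_case) (use M_rel[OF hm nd2] in \<open>simp_all add: m2.a_def m2.b_def m2.c_def\<close>)
      then show ?thesis by (rule tri_sim_rot2)
    qed
    from km show "tri_sim (A 0) (B 0) (C 0) (A k) (B k) (C k)"
    proof
      assume "k mod 3 = 2"
      then show ?thesis using m0.period_sim[OF T2, of "k div 3"] split2[of k] by simp
    next
      assume "k mod 3 = 0" then show ?thesis by (rule sim0)
    qed
  qed
  show ?thesis using pa pb pc pd' by blast
qed


end
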